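(* Let $d\ge 3$, $\Omega=\{1,\dots,d\}$, and $F\le F'\le \mathrm{Sym}(\Omega)$ with $F'$ preserving the orbits of $F$. Assume that $F$ acts freely on $\Omega$. Then every finitely generated subgroup $H$ of $G(F,F')$ which is isomorphic to a direct product $A\times B$ of two nontrivial groups is finite.
   Context: Let $T=\mathcal{T}_d$ be the $d$-regular tree. Fix a coloring $c\colon E(T)\to\Omega$ of its edges such that for every vertex $v$ the restriction $c_v$ to the set $E(v)$ of edges containing $v$ is a bijection onto $\Omega$. For $g\in\mathrm{Aut}(T)$ the local permutation at $v$ is $\sigma(g,v)=c_{gv}\circ g_v\circ c_v^{-1}$, where $g_v\colon E(v)\to E(gv)$ is induced by $g$. $U(F')=\{g:\sigma(g,v)\in F'\ \forall v\}$, $G(F)=\{g:\sigma(g,v)\in F \text{ for all but finitely many } v\}$, and $G(F,F')=G(F)\cap U(F')$. *)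

theory Defs
  imports "HOL-Algebra.Algebra"
begin

definition Omg :: "nat \<Rightarrow> nat set" where
  "Omg d = {1..d}"

text \<open>Concrete model of the d-regular tree: vertices are the reduced words over
  Omega (no two consecutive letters equal); w and w @ [a] are adjacent.\<close>
definition TV :: "nat \<Rightarrow> nat list set" where
  "TV d = {xs. set xs \<subseteq> Omg d \<and> (\<forall>i. Suc i < length xs \<longrightarrow> xs ! i \<noteq> xs ! Suc i)}"

definition tadj :: "nat \<Rightarrow> nat list \<Rightarrow> nat list \<Rightarrow> bool" where
  "tadj d v w \<longleftrightarrow> v \<in> TV d \<and> w \<in> TV d \<and> ((\<exists>a. w = v @ [a]) \<or> (\<exists>a. v = w @ [a]))"

definition TE :: "nat \<Rightarrow> nat list set set" where
  "TE d = {{v, w} | v w. tadj d v w}"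

definition Ev :: "nat \<Rightarrow> nat list \<Rightarrow> nat list set set" where
  "Ev d v = {e \<in> TE d. v \<in> e}"

definition legal_coloring :: "nat \<Rightarrow> (nat list set \<Rightarrow> nat) \<Rightarrow> bool" where
  "legal_coloring d c \<longleftrightarrow> (\<forall>v \<in> TV d. bij_betw c (Ev d v) (Omg d))"

definition AutT :: "nat \<Rightarrow> (nat list \<Rightarrow> nat list) set" where
  "AutT d = {g \<in> Bij (TV d). \<forall>v \<in> TV d. \<forall>w \<in> TV d. tadj d v w \<longleftrightarrow> tadj d (g v) (g w)}"

text \<open>Local permutation sigma(g,v) = c_{gv} o g_v o c_v^{-1}, an element of Sym(Omega)
  (extensional on Omega, as in BijGroup).\<close>
definition locperm :: "nat \<Rightarrow> (nat list set \<Rightarrow> nat) \<Rightarrow> (nat list \<Rightarrow> nat list) \<Rightarrow> nat list \<Rightarrow> nat \<Rightarrow> nat" where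
  "locperm d c g v = restrict (\<lambda>a. c (g ` (THE e. e \<in> Ev d v \<and> c e = a))) (Omg d)"

definition U_grp :: "nat \<Rightarrow> (nat list set \<Rightarrow> nat) \<Rightarrow> (nat \<Rightarrow> nat) set \<Rightarrow> (nat list \<Rightarrow> nat list) set" where
  "U_grp d c F' = {g \<in> AutT d. \<forall>v \<in> TV d. locperm d c g v \<in> F'}"

definition G_grp :: "nat \<Rightarrow> (nat list set \<Rightarrow> nat) \<Rightarrow> (nat \<Rightarrow> nat) set \<Rightarrow> (nat list \<Rightarrow> nat list) set" where
  "G_grp d c F = {g \<in> AutT d. finite {v \<in> TV d. locperm d c g v \<notin> F}}"

definition GFF :: "nat \<Rightarrow> (nat list set \<Rightarrow> nat) \<Rightarrow> (nat \<Rightarrow> nat) set \<Rightarrow> (nat \<Rightarrow> nat) set \<Rightarrow> (nat list \<Rightarrow> nat list) set" where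
  "GFF d c F F' = G_grp d c F \<inter> U_grp d c F'"

definition preserves_orbits :: "nat set \<Rightarrow> (nat \<Rightarrow> nat) set \<Rightarrow> (nat \<Rightarrow> nat) set \<Rightarrow> bool" where
  "preserves_orbits \<Omega> F F' \<longleftrightarrow> (\<forall>f' \<in> F'. \<forall>a \<in> \<Omega>. \<exists>f \<in> F. f' a = f a)"

definition acts_freely :: "nat set \<Rightarrow> (nat \<Rightarrow> nat) set \<Rightarrow> bool" where
  "acts_freely \<Omega> F \<longleftrightarrow> (\<forall>f \<in> F. \<forall>a \<in> \<Omega>. f a = a \<longrightarrow> (\<forall>b \<in> \<Omega>. f b = b))"

end

theory Submission
  imports Defs
begin

fun lcpl :: "'a list \<Rightarrow> 'a list \<Rightarrow> nat" where
  "lcpl (x#xs) (y#ys) = (if x = y then Suc (lcpl xs ys) else 0)"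
| "lcpl _ _ = 0"

definition dst :: "'a list \<Rightarrow> 'a list \<Rightarrow> nat" where
  "dst u v = length u + length v - 2 * lcpl u v"

lemma lcpl_le1: "lcpl u v \<le> length u"
  by (induction u v rule: lcpl.induct) auto
lemma lcpl_le2: "lcpl u v \<le> length v"
  by (induction u v rule: lcpl.induct) auto
lemma lcpl_comm: "lcpl u v = lcpl v u"
  by (induction u v rule: lcpl.induct) auto
lemma lcpl_self[simp]: "lcpl u u = length u"
  by (induction u) auto

lemma lcpl_ge_iff: "n \<le> lcpl u v \<longleftrightarrow> n \<le> length u \<and> n \<le> length v \<and> take n u = take n v"
proof (induction u v arbitrary: n rule: lcpl.induct)
  case (1 x xs y ys)
  then show ?case by (cases n) auto
qed auto

lemma lcpl_ultra: "min (lcpl x y) (lcpl y z) \<le> lcpl x z"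
proof -
  let ?m = "min (lcpl x y) (lcpl y z)"
  have "?m \<le> lcpl x y" "?m \<le> lcpl y z" by auto
  then have a: "?m \<le> length x \<and> ?m \<le> length y \<and> take ?m x = take ?m y"
    and b: "?m \<le> length y \<and> ?m \<le> length z \<and> take ?m y = take ?m z"
    using lcpl_ge_iff by blast+
  then show ?thesis using lcpl_ge_iff by (metis)
qed

lemma lcpl_take: "lcpl (take k u) v = min k (lcpl u v)"
proof (induction u arbitrary: k v)
  case (Cons x xs)
  then show ?case by (cases k; cases v) auto
qed simp

lemma lcpl_take2: "lcpl u (take k v) = min k (lcpl u v)"
  using lcpl_take[of k v u] by (simp add: lcpl_comm)

lemma dst_int: "int (dst u v) = int (length u) + int (length v) - 2 * int (lcpl u v)"
  unfolding dst_def using lcpl_le1[of u v] lcpl_le2[of u v] by simp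

lemma dst_comm: "dst u v = dst v u"
  unfolding dst_def by (simp add: lcpl_comm)

lemma dst_self[simp]: "dst u u = 0"
  unfolding dst_def by simp

lemma dst_0_iff: "dst u v = 0 \<longleftrightarrow> u = v"
proof
  assume "dst u v = 0"
  then have "lcpl u v = length u" "lcpl u v = length v"
    using lcpl_le1[of u v] lcpl_le2[of u v] unfolding dst_def by auto
  then show "u = v" using lcpl_ge_iff[of "length u" u v] by auto
qed simp

lemma fp_core: fixes A B C D E G :: nat
  assumes t1: "A \<ge> min C G" "C \<ge> min A G" "G \<ge> min A C"
    and t2: "A \<ge> min E D" "E \<ge> min A D" "D \<ge> min A E"
    and t3: "C \<ge> min E B" "E \<ge> min C B" "B \<ge> min C E"
    and t4: "G \<ge> min D B" "D \<ge> min G B" "B \<ge> min G D"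
  shows "A + B \<ge> C + D \<or> A + B \<ge> E + G"
proof -
  consider "A \<ge> C \<and> B \<ge> D" | "A \<ge> G \<and> B \<ge> E" | "B < D \<and> B < E" | "A < C \<and> B \<ge> D \<and> B < E"
    | "B < D \<and> A \<ge> C \<and> A < G \<and> B \<ge> E"
    by (cases "D \<le> B"; cases "E \<le> B"; cases "G \<le> A"; cases "C \<le> A") (use t1(1) in \<open>auto simp: min_def split: if_splits\<close>)
  then show ?thesis
  proof cases
    case 3
    then have "B \<ge> G" "B \<ge> C" using t3(3) t4(3) by (auto simp: min_def split: if_splits)
    then have "C = B" "G = B" using 3 t3(1) t4(1) by (auto simp: min_def split: if_splits)
    then show ?thesis using t1(1) t2(1) by (auto simp: min_def split: if_splits)
  next
    case 4
    then have "A \<ge> G" "B \<ge> C" using t1(1) t3(3) by (auto simp: min_def split: if_splits)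
    then have "G = A" using 4 t1(3) by (auto simp: min_def split: if_splits)
    then have "D = A" using 4 t4 \<open>A \<ge> G\<close> \<open>B \<ge> C\<close> by (auto simp: min_def split: if_splits)
    then show ?thesis using \<open>B \<ge> C\<close> by simp
  next
    case 5
    then have "C = A" "B \<ge> G" using t1(2) t4(3) by (auto simp: min_def split: if_splits)
    then have "E = A" using 5 t3(1) t3(2) by (auto simp: min_def split: if_splits)
    then show ?thesis using \<open>B \<ge> G\<close> by simp
  qed auto
qed
lemma four_point:
  "dst x y + dst z w \<le> max (dst x z + dst y w) (dst x w + dst y z)"
proof -
  have u: "\<And>a b c. lcpl a c \<ge> min (lcpl a b) (lcpl b c)"
    using lcpl_ultra by metis
  have c: "\<And>a b. lcpl a b = lcpl b a" by (rule lcpl_comm)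
  define A where "A = lcpl x y"
  define B where "B = lcpl z w"
  define C where "C = lcpl x z"
  define D where "D = lcpl y w"
  define E where "E = lcpl x w"
  define G where "G = lcpl y z"
  have m: "A + B \<ge> C + D \<or> A + B \<ge> E + G"
    apply (rule fp_core)
    unfolding A_def B_def C_def D_def E_def G_def using u c by metis+
  have "int (dst x y + dst z w) \<le> max (int (dst x z + dst y w)) (int (dst x w + dst y z))"
    unfolding of_nat_add dst_int A_def[symmetric] B_def[symmetric] C_def[symmetric] D_def[symmetric] E_def[symmetric] G_def[symmetric]
    using m by (simp add: lcpl_comm[of z x] lcpl_comm[of w y] max_def) linarith?
  then show ?thesis by linarith
qed

lemma take_TV: "u \<in> TV d \<Longrightarrow> take k u \<in> TV d"
  unfolding TV_def by (auto dest: in_set_takeD)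

lemma dst_triangle: "dst x z \<le> dst x y + dst y z"
  using four_point[of x z y y] by (simp add: dst_comm max_def split: if_splits)

lemma dst_parity: "even (dst u v + length u + length v)"
proof -
  have "dst u v + 2 * lcpl u v = length u + length v"
    unfolding dst_def using lcpl_le1[of u v] lcpl_le2[of u v] by simp
  then have "dst u v + length u + length v = 2 * (length u + length v - lcpl u v)"
    by simp
  then show ?thesis by simp
qed

lemma geo_point:
  assumes "u \<in> TV d" "v \<in> TV d" "t \<le> dst u v"
  shows "\<exists>w\<in>TV d. dst u w = t \<and> dst w v = dst u v - t"
proof -
  define l where "l = lcpl u v"
  obtain a where ua: "length u = l + a" using lcpl_le1[of u v] unfolding l_def using le_Suc_ex by blast
  obtain b where vb: "length v = l + b" using lcpl_le2[of u v] unfolding l_def using le_Suc_ex by blast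
  have dd: "dst u v = a + b" unfolding dst_def l_def[symmetric] ua vb by simp
  show ?thesis
  proof (cases "t \<le> a")
    case True
    define k where "k = l + (a - t)"
    have len: "length (take k u) = k" using True ua by (simp add: k_def)
    have "lcpl u (take k u) = k" using lcpl_take2[of u k u] ua by (simp add: k_def)
    then have "dst u (take k u) = l + a - k" unfolding dst_def len ua by simp
    then have 1: "dst u (take k u) = t" unfolding k_def using True by simp
    have "lcpl (take k u) v = l" using lcpl_take[of k u v] by (simp add: k_def l_def)
    then have "dst (take k u) v = k + (l + b) - 2 * l" unfolding dst_def len vb by simp
    then have 2: "dst (take k u) v = dst u v - t" unfolding dd k_def using True by simp
    show ?thesis using take_TV[OF assms(1), of k] 1 2 by blast
  next
    case False
    define k where "k = l + (t - a)"
    have tb: "t - a \<le> b" using assms(3) unfolding dd by simp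
    have len: "length (take k v) = k" using tb vb by (simp add: k_def)
    have "lcpl u (take k v) = l" using lcpl_take2[of u k v] by (simp add: k_def l_def)
    then have "dst u (take k v) = (l + a) + k - 2 * l" unfolding dst_def len ua by simp
    then have 1: "dst u (take k v) = t" unfolding k_def using False by simp
    have "lcpl (take k v) v = k" using lcpl_take[of k v v] vb tb by (simp add: k_def)
    then have "dst (take k v) v = l + b - k" unfolding dst_def len vb by simp
    then have 2: "dst (take k v) v = dst u v - t" unfolding dd k_def using False tb by simp
    show ?thesis using take_TV[OF assms(2), of k] 1 2 by blast
  qed
qed

lemma geo_unique:
  assumes "dst u w = t" "dst w v = dst u v - t" "dst u w' = t" "dst w' v = dst u v - t"
    and "t \<le> dst u v"
  shows "w = w'"
proof -
  have "dst u v + dst w w' \<le> max (dst u w + dst v w') (dst u w' + dst v w)"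
    by (rule four_point)
  then have "dst w w' = 0" using assms by (simp add: dst_comm)
  then show ?thesis by (simp add: dst_0_iff)
qed

lemma dst_snoc: "dst v (v @ [a]) = 1"
proof -
  have "lcpl v (v @ [a]) = length v" using lcpl_ge_iff[of "length v" v "v@[a]"] lcpl_le1[of v "v@[a]"]
    by simp
  then show ?thesis unfolding dst_def by simp
qed

lemma tadj_iff: "tadj d v w \<longleftrightarrow> v \<in> TV d \<and> w \<in> TV d \<and> dst v w = 1"
proof
  assume "tadj d v w" then show "v \<in> TV d \<and> w \<in> TV d \<and> dst v w = 1"
    unfolding tadj_def using dst_snoc dst_comm by metis
next
  assume a: "v \<in> TV d \<and> w \<in> TV d \<and> dst v w = 1"
  define l where "l = lcpl v w"
  have l1: "l \<le> length v" "l \<le> length w" unfolding l_def by (rule lcpl_le1, rule lcpl_le2)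
  have e: "length v + length w - 2 * l = 1" using a unfolding dst_def l_def by simp
  have tk: "take l v = take l w" using lcpl_ge_iff[of l v w] unfolding l_def by simp
  show "tadj d v w"
  proof (cases "length v = l")
    case True
    then have "length w = Suc l" using e l1 by linarith
    then have "w = take l w @ [w ! l]" by (metis lessI take_Suc_conv_app_nth take_all order_refl)
    then have "w = v @ [w ! l]" using tk True by simp
    then show ?thesis unfolding tadj_def using a by blast
  next
    case False
    then have "length v = Suc l" "length w = l" using e l1 by linarith+
    then have "v = take l v @ [v ! l]" by (metis lessI take_Suc_conv_app_nth take_all order_refl)
    then have "v = w @ [v ! l]" using tk \<open>length w = l\<close> by simp
    then show ?thesis unfolding tadj_def using a by blast
  qed
qed


lemma AutT_D:
  assumes "g \<in> AutT d"
  shows "\<And>x. x \<in> TV d \<Longrightarrow> g x \<in> TV d" "inj_on g (TV d)" "g ` TV d = TV d"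
    "\<And>v w. v \<in> TV d \<Longrightarrow> w \<in> TV d \<Longrightarrow> tadj d v w \<longleftrightarrow> tadj d (g v) (g w)"
  using assms unfolding AutT_def Bij_def bij_betw_def by auto

lemma AutT_dst_le:
  assumes g: "g \<in> AutT d" and "u \<in> TV d" "v \<in> TV d"
  shows "dst (g u) (g v) \<le> dst u v"
proof -
  have "\<forall>u v. u \<in> TV d \<longrightarrow> v \<in> TV d \<longrightarrow> dst u v = n \<longrightarrow> dst (g u) (g v) \<le> n" for n
  proof (induction n)
    case 0 then show ?case by (simp add: dst_0_iff)
  next
    case (Suc n)
    show ?case
    proof (intro allI impI)
      fix u v assume uv: "u \<in> TV d" "v \<in> TV d" "dst u v = Suc n"
      obtain w where w: "w \<in> TV d" "dst u w = 1" "dst w v = n"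
        using geo_point[OF uv(1,2), of 1] uv(3) by auto
      have "tadj d u w" using w uv tadj_iff by blast
      then have "tadj d (g u) (g w)" using AutT_D(4)[OF g] uv w by blast
      then have "dst (g u) (g w) = 1" using tadj_iff by blast
      moreover have "dst (g w) (g v) \<le> n" using Suc w uv by blast
      ultimately show "dst (g u) (g v) \<le> Suc n" using dst_triangle[of "g u" "g v" "g w"] by linarith
    qed
  qed
  then show ?thesis using assms by blast
qed

lemma AutT_dst_ge:
  assumes g: "g \<in> AutT d" and "u \<in> TV d" "v \<in> TV d"
  shows "dst u v \<le> dst (g u) (g v)"
proof -
  have "\<forall>u v. u \<in> TV d \<longrightarrow> v \<in> TV d \<longrightarrow> dst (g u) (g v) = n \<longrightarrow> dst u v \<le> n" for n
  proof (induction n)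
    case 0 then show ?case using AutT_D(2)[OF g] by (auto simp: dst_0_iff dest: inj_onD)
  next
    case (Suc n)
    show ?case
    proof (intro allI impI)
      fix u v assume uv: "u \<in> TV d" "v \<in> TV d" "dst (g u) (g v) = Suc n"
      obtain x where x: "x \<in> TV d" "dst (g u) x = 1" "dst x (g v) = n"
        using geo_point[OF AutT_D(1)[OF g uv(1)] AutT_D(1)[OF g uv(2)], of 1] uv(3) by auto
      obtain w where w: "w \<in> TV d" "x = g w" using AutT_D(3)[OF g] x(1) by blast
      have "tadj d (g u) (g w)" using x w uv tadj_iff AutT_D(1)[OF g] by metis
      then have "tadj d u w" using AutT_D(4)[OF g] uv w by blast
      then have "dst u w = 1" using tadj_iff by blast
      moreover have "dst w v \<le> n" using Suc w x uv by blast
      ultimately show "dst u v \<le> Suc n" using dst_triangle[of u v w] by linarith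
    qed
  qed
  then show ?thesis using assms by blast
qed

lemma AutT_dst:
  assumes "g \<in> AutT d" "u \<in> TV d" "v \<in> TV d"
  shows "dst (g u) (g v) = dst u v"
  using AutT_dst_le[OF assms] AutT_dst_ge[OF assms] by simp

lemma fpA: "dst x z + dst y w < dst x y + dst z w \<Longrightarrow> dst x y + dst z w \<le> dst x w + dst y z"
  using four_point[of x y z w] by linarith
lemma fpB: "dst x w + dst y z < dst x y + dst z w \<Longrightarrow> dst x y + dst z w \<le> dst x z + dst y w"
  using four_point[of x y z w] by linarith

definition isom :: "nat \<Rightarrow> (nat list \<Rightarrow> nat list) \<Rightarrow> bool" where
  "isom d g \<longleftrightarrow> (\<forall>x\<in>TV d. g x \<in> TV d) \<and> (\<forall>x\<in>TV d. \<forall>y\<in>TV d. dst (g x) (g y) = dst x y)"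

lemma isomD: "isom d g \<Longrightarrow> x \<in> TV d \<Longrightarrow> g x \<in> TV d"
  "isom d g \<Longrightarrow> x \<in> TV d \<Longrightarrow> y \<in> TV d \<Longrightarrow> dst (g x) (g y) = dst x y"
  unfolding isom_def by auto

lemma AutT_isom: "g \<in> AutT d \<Longrightarrow> isom d g"
  unfolding isom_def using AutT_D(1) AutT_dst by blast

lemma isom_comp: "isom d g \<Longrightarrow> isom d h \<Longrightarrow> isom d (g \<circ> h)"
  unfolding isom_def by auto

lemma isom_id: "isom d id" unfolding isom_def by auto

lemma isom_funpow: "isom d g \<Longrightarrow> isom d (g ^^ n)"
  by (induction n) (auto simp: isom_id isom_comp)

lemma isom_inj: "isom d g \<Longrightarrow> x \<in> TV d \<Longrightarrow> y \<in> TV d \<Longrightarrow> g x = g y \<Longrightarrow> x = y"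
  using isomD(2)[of d g x y] by (auto simp: dst_0_iff)

lemma funpow_TV: "isom d g \<Longrightarrow> x \<in> TV d \<Longrightarrow> (g ^^ n) x \<in> TV d"
  using isom_funpow isomD(1) by blast

definition axpt :: "nat \<Rightarrow> (nat list \<Rightarrow> nat list) \<Rightarrow> nat list \<Rightarrow> bool" where
  "axpt d g y \<longleftrightarrow> y \<in> TV d \<and> 0 < dst y (g y) \<and> dst y (g (g y)) = 2 * dst y (g y)"

lemma midpoint_lemma:
  assumes g: "isom d g" and x: "x \<in> TV d" and m: "m \<in> TV d"
    and 1: "dst x m = k" and 2: "dst m (g x) = k" and 3: "dst x (g x) = 2 * k"
    and a: "0 < dst m (g m)"
  shows "dst m (g (g m)) = 2 * dst m (g m)"
proof -
  define a where "a = dst m (g m)"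
  have gx: "g x \<in> TV d" and gm: "g m \<in> TV d" and ggx: "g (g x) \<in> TV d" and ggm: "g (g m) \<in> TV d"
    using isomD(1)[OF g] x m by blast+
  have i1: "dst (g x) (g m) = k" using isomD(2)[OF g x m] 1 by simp
  have i2: "dst (g m) (g (g x)) = k" using isomD(2)[OF g m gx] 2 by simp
  have i3: "dst (g x) (g (g x)) = 2 * k" using isomD(2)[OF g x gx] 3 by simp
  have i4: "dst (g m) (g (g m)) = a" using isomD(2)[OF g m gm] a_def by simp
  have i5: "dst (g (g m)) (g (g x)) = k" using isomD(2)[OF g gm gx] i1 by (simp add: dst_comm)
  have s1: "dst m (g (g x)) + dst (g m) (g x) \<le> dst m (g m) + dst (g (g x)) (g x)
          \<or> dst m (g (g x)) + dst (g m) (g x) \<le> dst m (g x) + dst (g (g x)) (g m)"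
    using four_point[of m "g (g x)" "g m" "g x"] by linarith
  have e1: "dst m (g (g x)) \<le> a + k"
    using s1 i1 i2 i3 2 a a_def by (auto simp: dst_comm)
  have "dst m (g m) + dst (g x) (g (g x)) \<le> dst m (g (g x)) + dst (g m) (g x)"
    apply (rule fpA) using i1 i2 i3 2 a a_def by (auto simp: dst_comm)
  then have e2: "dst m (g (g x)) = a + k" using e1 i1 i3 a_def by (simp add: dst_comm)
  have "dst (g m) m + dst (g x) x \<le> dst (g m) x + dst m (g x)"
    apply (rule fpA) using i1 1 3 a a_def by (auto simp: dst_comm)
  moreover have "dst (g m) x + dst m (g x) \<le> dst (g m) m + dst x (g x)
      \<or> dst (g m) x + dst m (g x) \<le> dst (g m) (g x) + dst x m"
    using four_point[of "g m" x m "g x"] by linarith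
  ultimately have e3: "dst (g m) x = a + k" using i1 1 2 3 a a_def by (auto simp: dst_comm)
  have e4: "dst (g (g m)) (g x) = a + k" using isomD(2)[OF g gm x] e3 by simp
  have "dst m (g (g x)) + dst (g (g m)) (g x) \<le> dst m (g (g m)) + dst (g (g x)) (g x)"
    apply (rule fpB) using e2 e4 2 i4 i2 i5 a a_def by (auto simp: dst_comm)
  moreover have "dst m (g (g m)) + dst (g x) (g (g x)) \<le> dst m (g x) + dst (g (g m)) (g (g x))
      \<or> dst m (g (g m)) + dst (g x) (g (g x)) \<le> dst m (g (g x)) + dst (g (g m)) (g x)"
    using four_point[of m "g (g m)" "g x" "g (g x)"] by linarith
  ultimately show ?thesis using e2 e4 2 i2 i3 i5 a a_def by (auto simp: dst_comm)
qed


lemma funpow_isom_step: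
  assumes g: "isom d g" and y: "y \<in> TV d"
  shows "dst ((g ^^ j) y) ((g ^^ Suc j) y) = dst y (g y)"
proof -
  have "(g ^^ Suc j) y = (g ^^ j) (g y)" by (simp add: funpow_swap1)
  then show ?thesis using isomD(2)[OF isom_funpow[OF g, of j] y isomD(1)[OF g y]] by simp
qed

lemma axis_seq:
  assumes g: "isom d g" and ax: "axpt d g y"
  shows "dst y ((g ^^ n) y) = n * dst y (g y)"
proof -
  define l where "l = dst y (g y)"
  have y: "y \<in> TV d" and l0: "0 < l" and l2: "dst y (g (g y)) = 2 * l" using ax unfolding axpt_def l_def by auto
  let ?z = "\<lambda>j. (g ^^ j) y"
  have zW: "?z j \<in> TV d" for j using funpow_TV[OF g y] .
  have gy: "g y \<in> TV d" using isomD(1)[OF g y] .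
  have shift: "dst (g y) (?z (Suc j)) = dst y (?z j)" for j
    using isomD(2)[OF g y zW[of j]] by simp
  have step: "dst (?z j) (?z (Suc j)) = l" for j using funpow_isom_step[OF g y] l_def by simp
  have "dst y (?z n) = n * l \<and> dst y (?z (Suc n)) = Suc n * l" for n
  proof (induction n)
    case 0 then show ?case using l_def by simp
  next
    case (Suc n)
    have A: "dst y (?z (Suc n)) = Suc n * l" using Suc by blast
    have B: "dst y (?z n) = n * l" using Suc by blast
    have C: "dst y (?z (Suc (Suc n))) = Suc (Suc n) * l"
    proof (cases n)
      case 0 then show ?thesis using l2 by (simp add: numeral_2_eq_2)
    next
      case (Suc n')
      have s1: "dst (g y) (?z (Suc n)) = n * l" using shift[of n] B by simp
      have s2: "dst (g y) (?z (Suc (Suc n))) = Suc n * l" using shift[of "Suc n"] A by simp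
      have s3: "dst (?z (Suc n)) (?z (Suc (Suc n))) = l" using step by blast
      have up: "dst y (?z (Suc (Suc n))) + dst (g y) (?z (Suc n)) \<le> dst y (g y) + dst (?z (Suc (Suc n))) (?z (Suc n))
         \<or> dst y (?z (Suc (Suc n))) + dst (g y) (?z (Suc n)) \<le> dst y (?z (Suc n)) + dst (?z (Suc (Suc n))) (g y)"
        using four_point[of y "?z (Suc (Suc n))" "g y" "?z (Suc n)"] by linarith
      have "dst y (g y) + dst (?z (Suc n)) (?z (Suc (Suc n))) < dst y (?z (Suc n)) + dst (g y) (?z (Suc (Suc n)))"
        using A s2 s3 l_def l0 Suc by simp
      then have lo: "dst y (?z (Suc n)) + dst (g y) (?z (Suc (Suc n))) \<le> dst y (?z (Suc (Suc n))) + dst (?z (Suc n)) (g y)"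
        by (rule fpA)
      show ?thesis using up lo A s1 s2 s3 l_def l0 Suc by (auto simp: dst_comm algebra_simps)
    qed
    show ?case using A C by simp
  qed
  then show ?thesis using l_def by blast
qed

lemma axis_seq2:
  assumes g: "isom d g" and ax: "axpt d g y" and "m \<le> n"
  shows "dst ((g ^^ m) y) ((g ^^ n) y) = (n - m) * dst y (g y)"
proof -
  have y: "y \<in> TV d" using ax unfolding axpt_def by auto
  have "(g ^^ n) y = (g ^^ m) ((g ^^ (n - m)) y)" using assms(3)
    by (metis funpow_add le_add_diff_inverse o_apply)
  then show ?thesis using isomD(2)[OF isom_funpow[OF g, of m] y funpow_TV[OF g y, of "n - m"]]
      axis_seq[OF g ax, of "n - m"] by simp
qed

lemma axis_no_periodic:
  assumes g: "isom d g" and ax: "axpt d g y" and w: "w \<in> TV d" and j: "0 < j" and p: "(g ^^ j) w = w"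
  shows False
proof -
  have y: "y \<in> TV d" and l0: "0 < dst y (g y)" using ax unfolding axpt_def by auto
  define m where "m = Suc (2 * dst y w)"
  have pw: "(g ^^ (j * m)) w = w"
  proof -
    have "((g ^^ j) ^^ k) w = w" for k by (induction k) (auto simp: p)
    then show ?thesis by (simp add: funpow_mult)
  qed
  have "dst y ((g ^^ (j * m)) y) \<le> dst y w + dst w ((g ^^ (j * m)) y)" by (rule dst_triangle)
  also have "dst w ((g ^^ (j * m)) y) = dst y w"
    using isomD(2)[OF isom_funpow[OF g, of "j*m"] w y] pw by (simp add: dst_comm)
  finally have "(j * m) * dst y (g y) \<le> 2 * dst y w" using axis_seq[OF g ax, of "j*m"] by simp
  moreover have "m \<le> (j * m) * dst y (g y)" using j l0 by simp
  ultimately show False unfolding m_def by simp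
qed

lemma fpD: "dst x y + dst z w \<le> dst x z + dst y w \<or> dst x y + dst z w \<le> dst x w + dst y z"
  using four_point[of x y z w] by linarith

definition cvx :: "nat \<Rightarrow> nat list set \<Rightarrow> bool" where
  "cvx d Q \<longleftrightarrow> Q \<subseteq> TV d \<and> (\<forall>u\<in>Q. \<forall>v\<in>Q. \<forall>w\<in>TV d. dst u w + dst w v = dst u v \<longrightarrow> w \<in> Q)"

definition Fix :: "nat \<Rightarrow> (nat list \<Rightarrow> nat list) \<Rightarrow> nat list set" where
  "Fix d g = {x \<in> TV d. g x = x}"

lemma isom_fix_geo:
  assumes g: "isom d g" and u: "u \<in> TV d" "g u = u" and v: "v \<in> TV d" "g v = v"
    and w: "w \<in> TV d" "dst u w + dst w v = dst u v"
  shows "g w = w"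
proof -
  have "dst u (g w) = dst u w" using isomD(2)[OF g u(1) w(1)] u by simp
  moreover have "dst (g w) v = dst w v" using isomD(2)[OF g w(1) v(1)] v by simp
  ultimately show ?thesis using geo_unique[of u "g w" "dst u w" v w] w by simp
qed

lemma fix_cvx: "isom d g \<Longrightarrow> cvx d (Fix d g)"
  unfolding cvx_def Fix_def using isom_fix_geo by blast

lemma cvx_Int: "cvx d Q \<Longrightarrow> cvx d Y \<Longrightarrow> cvx d (Q \<inter> Y)"
  unfolding cvx_def by blast

lemma dst1_parity: "dst q p1 = 1 \<Longrightarrow> odd (length q + length p1)"
  using dst_parity[of q p1] by simp

lemma turn_lemma:
  assumes "dst q p1 = 1" "dst q r1 = 1" "p1 \<noteq> r1"
    and "dst p1 p + 1 = dst q p" "dst r1 r + 1 = dst q r"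
  shows "dst p r = dst p q + dst q r"
proof -
  have "even (dst p1 r1)" using dst_parity[of p1 r1] dst1_parity[OF assms(1)] dst1_parity[OF assms(2)]
    by presburger
  moreover have "dst p1 r1 \<le> 2" using dst_triangle[of p1 r1 q] assms(1,2) by (simp add: dst_comm)
  moreover have "dst p1 r1 \<noteq> 0" using assms(3) by (simp add: dst_0_iff)
  ultimately have pr: "dst p1 r1 = 2" by presburger
  have le: "dst p r \<le> dst p q + dst q r" by (rule dst_triangle)
  show ?thesis
  proof (rule ccontr)
    assume "dst p r \<noteq> dst p q + dst q r"
    then have lt: "dst p r < dst p q + dst q r" using le by simp
    have f1: "dst p1 r + dst p q \<le> dst p1 p + dst r q \<or> dst p1 r + dst p q \<le> dst p1 q + dst r p"
      using fpD[of p1 r p q] .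
    have f2: "dst p1 r1 + dst r q \<le> dst p1 r + dst r1 q \<or> dst p1 r1 + dst r q \<le> dst p1 q + dst r1 r"
      using fpD[of p1 r1 r q] .
    have c: "dst p1 q = 1" "dst r1 q = 1" "dst r q = dst q r" "dst p q = dst q p" "dst r r1 = dst r1 r" "dst r p = dst p r"
      using assms(1,2) by (simp_all add: dst_comm)
    have t: "dst p1 r \<le> dst p1 q + dst q r" by (rule dst_triangle)
    from f1 show False
    proof
      assume h1: "dst p1 r + dst p q \<le> dst p1 p + dst r q"
      from f2 show False
      proof
        assume "dst p1 r1 + dst r q \<le> dst p1 r + dst r1 q"
        then show False using h1 c lt pr assms(4,5) by linarith
      next
        assume "dst p1 r1 + dst r q \<le> dst p1 q + dst r1 r"
        then show False using c pr assms(4,5) by linarith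
      qed
    next
      assume h1: "dst p1 r + dst p q \<le> dst p1 q + dst r p"
      from f2 show False
      proof
        assume "dst p1 r1 + dst r q \<le> dst p1 r + dst r1 q"
        then show False using h1 c lt pr assms(4,5) t by linarith
      next
        assume "dst p1 r1 + dst r q \<le> dst p1 q + dst r1 r"
        then show False using c pr assms(4,5) by linarith
      qed
    qed
  qed
qed

lemma median:
  assumes a: "a \<in> TV d" and b: "b \<in> TV d" and c: "c \<in> TV d"
  shows "\<exists>m\<in>TV d. dst a m + dst m b = dst a b \<and> dst b m + dst m c = dst b c \<and> dst a m + dst m c = dst a c"
proof -
  have ev: "even (dst a b + dst a c + dst b c)"
    using dst_parity[of a b] dst_parity[of a c] dst_parity[of b c] by presburger
  define k where "k = (dst a b + dst a c - dst b c) div 2"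
  have t1: "dst a c \<le> dst a b + dst b c" by (rule dst_triangle)
  have t2: "dst b c \<le> dst a b + dst a c" using dst_triangle[of b c a] by (simp add: dst_comm)
  have t3: "dst a b \<le> dst a c + dst b c" using dst_triangle[of a b c] by (simp add: dst_comm)
  have k2: "2 * k = dst a b + dst a c - dst b c" unfolding k_def using ev t2 by presburger
  have kab: "k \<le> dst a b" using k2 t1 by linarith
  obtain m where m: "m \<in> TV d" "dst a m = k" "dst m b = dst a b - k" using geo_point[OF a b kab] by auto
  have bm: "dst b m = dst a b - k" using m(3) by (simp add: dst_comm)
  have kac: "k \<le> dst a c" using k2 t3 by linarith
  have "dst a b + dst m c \<le> dst a m + dst b c \<or> dst a b + dst m c \<le> dst a c + dst b m"
    using fpD[of a b m c] .
  then have "dst m c \<le> dst a c - k"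
  proof
    assume "dst a b + dst m c \<le> dst a m + dst b c"
    then show ?thesis using m(2) k2 kab kac t2 by linarith
  next
    assume "dst a b + dst m c \<le> dst a c + dst b m"
    then show ?thesis using bm k2 kab kac by linarith
  qed
  moreover have "dst a c \<le> dst a m + dst m c" by (rule dst_triangle)
  ultimately have mc: "dst m c = dst a c - k" using m(2) by linarith
  have e1: "dst a m + dst m b = dst a b" using m kab by linarith
  have e2: "dst b m + dst m c = dst b c" using bm mc k2 kab kac t2 by linarith
  have e3: "dst a m + dst m c = dst a c" using m(2) mc kac by linarith
  show ?thesis using m(1) e1 e2 e3 by blast
qed

lemma cvxD: "cvx d Q \<Longrightarrow> u \<in> Q \<Longrightarrow> v \<in> Q \<Longrightarrow> w \<in> TV d \<Longrightarrow> dst u w + dst w v = dst u v \<Longrightarrow> w \<in> Q"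
  unfolding cvx_def by blast

lemma cvx_sub: "cvx d Q \<Longrightarrow> Q \<subseteq> TV d" unfolding cvx_def by blast

lemma helly3:
  assumes "cvx d Q" "cvx d Y" "cvx d Z" "Q \<inter> Y \<noteq> {}" "Y \<inter> Z \<noteq> {}" "Q \<inter> Z \<noteq> {}"
  shows "Q \<inter> Y \<inter> Z \<noteq> {}"
proof -
  obtain a b c where abc: "a \<in> Q \<inter> Y" "b \<in> Y \<inter> Z" "c \<in> Q \<inter> Z" using assms(4-6) by blast
  have W: "a \<in> TV d" "b \<in> TV d" "c \<in> TV d" using abc cvx_sub[OF assms(1)] cvx_sub[OF assms(2)] by blast+
  obtain m where m: "m \<in> TV d" "dst a m + dst m b = dst a b" "dst b m + dst m c = dst b c"
    "dst a m + dst m c = dst a c" using median[OF W] by blast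
  have "m \<in> Y" using cvxD[OF assms(2), of a b m] abc m by blast
  moreover have "m \<in> Z" using cvxD[OF assms(3), of b c m] abc m by blast
  moreover have "m \<in> Q" using cvxD[OF assms(1), of a c m] abc m by blast
  ultimately show ?thesis by blast
qed

lemma helly:
  assumes "finite I" "I \<noteq> {}" "\<forall>i\<in>I. cvx d (Q i)" "\<forall>i\<in>I. \<forall>j\<in>I. Q i \<inter> Q j \<noteq> {}"
  shows "(\<Inter>i\<in>I. Q i) \<noteq> {}"
  using assms
proof (induction "card I" arbitrary: I Q rule: less_induct)
  case less
  show ?case
  proof (cases "\<exists>i. I = {i}")
    case True
    then obtain i where "I = {i}" by blast
    then show ?thesis using less.prems(4) by auto
  next
    case False
    obtain i where i: "i \<in> I" using less.prems(2) by blast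
    obtain j where j: "j \<in> I" "j \<noteq> i" using False i by blast
    define I' where "I' = I - {i}"
    define Q' where "Q' = Q(j := Q i \<inter> Q j)"
    have "card I' < card I" unfolding I'_def using i less.prems(1) by (rule card_Diff1_less[rotated])
    moreover have "finite I'" "I' \<noteq> {}" unfolding I'_def using less.prems(1) j by auto
    moreover have "\<forall>k\<in>I'. cvx d (Q' k)" unfolding Q'_def I'_def using less.prems(3) i j cvx_Int by auto
    moreover have "\<forall>k\<in>I'. \<forall>l\<in>I'. Q' k \<inter> Q' l \<noteq> {}"
    proof (intro ballI)
      fix k l assume kl: "k \<in> I'" "l \<in> I'"
      have h3: "Q i \<inter> Q j \<inter> Q m \<noteq> {}" if "m \<in> I" for m
        using helly3[of d "Q i" "Q j" "Q m"] less.prems(3,4) i j that by auto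
      have kI: "k \<in> I" "l \<in> I" using kl unfolding I'_def by auto
      consider "k = j" "l = j" | "k = j" "l \<noteq> j" | "k \<noteq> j" "l = j" | "k \<noteq> j" "l \<noteq> j" by blast
      then show "Q' k \<inter> Q' l \<noteq> {}"
      proof cases
        case 1 then show ?thesis using less.prems(4) i j unfolding Q'_def by simp
      next
        case 2 then show ?thesis using h3[OF kI(2)] unfolding Q'_def by simp
      next
        case 3 then show ?thesis using h3[OF kI(1)] unfolding Q'_def by (simp add: Int_ac)
      next
        case 4 then show ?thesis using less.prems(4) kI unfolding Q'_def by simp
      qed
    qed
    ultimately have "(\<Inter>k\<in>I'. Q' k) \<noteq> {}" using less.hyps by blast
    moreover have "(\<Inter>k\<in>I'. Q' k) = (\<Inter>k\<in>I. Q k)" unfolding Q'_def I'_def using i j by auto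
    ultimately show ?thesis by simp
  qed
qed

lemma serre_pair:
  assumes s: "isom d s" and t: "isom d t" and ns: "Fix d s \<noteq> {}" and nt: "Fix d t \<noteq> {}"
    and disj: "Fix d s \<inter> Fix d t = {}"
  shows "\<exists>y. axpt d (s \<circ> t) y"
proof -
  define P where "P = (\<lambda>n. \<exists>p\<in>Fix d t. \<exists>q\<in>Fix d s. dst p q = n)"
  have ex: "\<exists>n. P n" using ns nt unfolding P_def by blast
  define D where "D = (LEAST n. P n)"
  have PD: "P D" unfolding D_def using ex by (rule LeastI_ex)
  have Dmin: "\<And>p q. p \<in> Fix d t \<Longrightarrow> q \<in> Fix d s \<Longrightarrow> D \<le> dst p q"
    unfolding D_def P_def by (rule Least_le) blast
  obtain p q where p: "p \<in> Fix d t" and q: "q \<in> Fix d s" and pq: "dst p q = D"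
    using PD unfolding P_def by blast
  have pW: "p \<in> TV d" "t p = p" using p unfolding Fix_def by auto
  have qW: "q \<in> TV d" "s q = q" using q unfolding Fix_def by auto
  have D0: "0 < D" using pq disj p q by (auto simp: dst_0_iff)
  have qp: "dst q p = D" using pq by (simp add: dst_comm)
  obtain p1 where p1: "p1 \<in> TV d" "dst q p1 = 1" "dst p1 p = D - 1"
    using geo_point[OF qW(1) pW(1), of 1] qp D0 by auto
  have sp1: "s p1 \<noteq> p1"
  proof
    assume "s p1 = p1"
    then have "p1 \<in> Fix d s" using p1 unfolding Fix_def by simp
    then have "D \<le> dst p p1" using Dmin[OF p] by blast
    then show False using p1(3) D0 by (simp add: dst_comm)
  qed
  have sW: "s p \<in> TV d" "s p1 \<in> TV d" using isomD(1)[OF s] pW p1 by auto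
  have a1: "dst q (s p1) = 1" using isomD(2)[OF s qW(1) p1(1)] qW p1 by simp
  have a2: "dst (s p1) (s p) = D - 1" using isomD(2)[OF s p1(1) pW(1)] p1 by simp
  have a3: "dst q (s p) = D" using isomD(2)[OF s qW(1) pW(1)] qW qp by simp
  have "dst p (s p) = dst p q + dst q (s p)"
    apply (rule turn_lemma[of q p1 "s p1"]) using p1 a1 a2 a3 sp1 qp D0 by auto
  then have pp: "dst p (s p) = 2 * D" using pq a3 by simp
  let ?g = "s \<circ> t"
  have g: "isom d ?g" using isom_comp[OF s t] .
  have gp: "?g p = s p" using pW by simp
  have gq: "?g q \<noteq> q"
  proof
    assume "?g q = q"
    then have "s (t q) = s q" using qW by simp
    then have "t q = q" using isom_inj[OF s isomD(1)[OF t qW(1)] qW(1)] by simp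
    then show False using disj p q qW unfolding Fix_def by blast
  qed
  have pos: "0 < dst q (?g q)" using gq dst_0_iff[of q "?g q"] by (metis gr0I)
  have "dst q (?g (?g q)) = 2 * dst q (?g q)"
    apply (rule midpoint_lemma[OF g pW(1) qW(1), of D])
    using pq a3 pp gp pos by simp_all
  then show ?thesis using qW pos unfolding axpt_def by blast
qed

lemma btw:
  assumes "dst u p + dst p v = dst u v" "dst u z + dst z v = dst u v" "dst u p \<le> dst u z"
  shows "dst p z = dst u z - dst u p"
proof -
  have "dst u v + dst p z \<le> dst u p + dst v z \<or> dst u v + dst p z \<le> dst u z + dst v p"
    using fpD[of u v p z] .
  moreover have "dst u z \<le> dst u p + dst p z" by (rule dst_triangle)
  ultimately show ?thesis using assms by (auto simp: dst_comm)
qed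

locale axl =
  fixes d :: nat and a ai :: "nat list \<Rightarrow> nat list" and y :: "nat list"
  assumes a: "isom d a" and ai: "isom d ai"
    and inv1: "\<And>x. x \<in> TV d \<Longrightarrow> a (ai x) = x" and inv2: "\<And>x. x \<in> TV d \<Longrightarrow> ai (a x) = x"
    and ax: "axpt d a y"
begin

definition lam where "lam = dst y (a y)"
definition Lpt where "Lpt z \<longleftrightarrow> z \<in> TV d \<and> dst z (a z) = lam \<and> dst z (a (a z)) = 2 * lam"

lemma yW: "y \<in> TV d" and lam0: "0 < lam" and Ly: "Lpt y"
  using ax unfolding axpt_def lam_def Lpt_def by auto

lemma aW: "x \<in> TV d \<Longrightarrow> (a ^^ n) x \<in> TV d" using funpow_TV[OF a] by blast
lemma aiW: "x \<in> TV d \<Longrightarrow> (ai ^^ n) x \<in> TV d" using funpow_TV[OF ai] by blast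

lemma a_ai_pow: "x \<in> TV d \<Longrightarrow> (a ^^ n) ((ai ^^ n) x) = x"
proof (induction n arbitrary: x)
  case (Suc n)
  have "(a ^^ Suc n) ((ai ^^ Suc n) x) = (a ^^ n) (a (ai ((ai ^^ n) x)))"
    by (simp add: funpow_swap1)
  also have "\<dots> = x" using inv1[OF aiW[OF Suc.prems]] Suc by simp
  finally show ?case .
qed simp

lemma ai_a_pow: "x \<in> TV d \<Longrightarrow> (ai ^^ n) ((a ^^ n) x) = x"
proof (induction n arbitrary: x)
  case (Suc n)
  have "(ai ^^ Suc n) ((a ^^ Suc n) x) = (ai ^^ n) (ai (a ((a ^^ n) x)))"
    by (simp add: funpow_swap1)
  also have "\<dots> = x" using inv2[OF aW[OF Suc.prems]] Suc by simp
  finally show ?case .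
qed simp

lemma a_ai_pow2: "x \<in> TV d \<Longrightarrow> m \<le> n \<Longrightarrow> (a ^^ m) ((ai ^^ n) x) = (ai ^^ (n - m)) x"
proof -
  assume x: "x \<in> TV d" and mn: "m \<le> n"
  have "(ai ^^ n) x = (ai ^^ m) ((ai ^^ (n - m)) x)" using mn
    by (metis funpow_add le_add_diff_inverse o_apply)
  then show ?thesis using a_ai_pow[OF aiW[OF x]] by simp
qed

lemma comm_pow:
  assumes "\<And>x. x \<in> TV d \<Longrightarrow> f x \<in> TV d" "\<And>x. x \<in> TV d \<Longrightarrow> g x \<in> TV d"
    "\<And>x. x \<in> TV d \<Longrightarrow> f (g x) = g (f x)"
  shows "x \<in> TV d \<Longrightarrow> (f ^^ n) (g x) = g ((f ^^ n) x)"
proof (induction n arbitrary: x)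
  case (Suc n)
  have "(f ^^ n) x \<in> TV d" using Suc.prems assms(1) by (induction n) auto
  then show ?case using Suc assms by simp
qed simp

lemma ai_comm: "x \<in> TV d \<Longrightarrow> ai (a x) = a (ai x)"
  using inv1 inv2 by simp

lemma dist_yp: "dst y ((a ^^ n) y) = n * lam"
  using axis_seq[OF a ax] lam_def by simp

lemma dist_ym: "dst y ((ai ^^ n) y) = n * lam"
proof -
  have "dst ((a ^^ n) y) ((a ^^ n) ((ai ^^ n) y)) = dst y ((ai ^^ n) y)"
    using isomD(2)[OF isom_funpow[OF a] yW aiW[OF yW]] .
  then show ?thesis using a_ai_pow[OF yW] dist_yp by (simp add: dst_comm)
qed

lemma dist_ym_yp: "dst ((ai ^^ n) y) ((a ^^ m) y) = (n + m) * lam"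
proof -
  have "dst ((a ^^ n) ((ai ^^ n) y)) ((a ^^ n) ((a ^^ m) y)) = dst ((ai ^^ n) y) ((a ^^ m) y)"
    using isomD(2)[OF isom_funpow[OF a] aiW[OF yW] aW[OF yW]] .
  moreover have "(a ^^ n) ((a ^^ m) y) = (a ^^ (n + m)) y" by (simp add: funpow_add)
  ultimately show ?thesis using a_ai_pow[OF yW] dist_yp by simp
qed

lemma dist_ym_ym: "m \<le> n \<Longrightarrow> dst ((ai ^^ m) y) ((ai ^^ n) y) = (n - m) * lam"
proof -
  assume mn: "m \<le> n"
  have "dst ((a ^^ m) ((ai ^^ m) y)) ((a ^^ m) ((ai ^^ n) y)) = dst ((ai ^^ m) y) ((ai ^^ n) y)"
    using isomD(2)[OF isom_funpow[OF a] aiW[OF yW] aiW[OF yW]] .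
  then show ?thesis using a_ai_pow[OF yW] a_ai_pow2[OF yW mn] dist_ym by simp
qed

lemma Lpt_axpt: "Lpt z \<Longrightarrow> axpt d a z"
  unfolding Lpt_def axpt_def using lam0 by auto

lemma Lpt_map:
  assumes L: "Lpt z" and b: "isom d b" and bc: "\<And>x. x \<in> TV d \<Longrightarrow> b (a x) = a (b x)"
  shows "Lpt (b z)"
proof -
  have z: "z \<in> TV d" using L unfolding Lpt_def by auto
  have az: "a z \<in> TV d" "a (a z) \<in> TV d" using isomD(1)[OF a] z by auto
  have "dst (b z) (a (b z)) = dst z (a z)" using isomD(2)[OF b z az(1)] bc[OF z] by simp
  moreover have "dst (b z) (a (a (b z))) = dst z (a (a z))"
    using isomD(2)[OF b z az(2)] bc[OF z] bc[OF az(1)] by simp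
  ultimately show ?thesis using L isomD(1)[OF b z] unfolding Lpt_def by simp
qed

lemma axis_line:
  assumes L: "Lpt z" and n: "dst z y < n * lam"
  shows "dst z ((a ^^ n) y) + dst z ((ai ^^ n) y) = 2 * n * lam"
proof -
  have z: "z \<in> TV d" using L unfolding Lpt_def by auto
  let ?an = "a ^^ n"
  have anz: "?an z \<in> TV d" using aW[OF z] .
  have d1: "dst z (?an z) = n * lam" using axis_seq[OF a Lpt_axpt[OF L], of n] L unfolding Lpt_def by simp
  have d2: "dst y (?an y) = n * lam" using dist_yp .
  have d3: "dst (?an z) (?an y) = dst z y" using isomD(2)[OF isom_funpow[OF a] z yW] .
  have d4: "dst (?an z) y = dst z ((ai ^^ n) y)"
    using isomD(2)[OF isom_funpow[OF ai, of n] anz yW] ai_a_pow[OF z, of n] by simp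
  have "dst z y + dst (?an z) (?an y) < dst z (?an z) + dst y (?an y)" using d1 d2 d3 n by simp
  then have lo: "dst z (?an z) + dst y (?an y) \<le> dst z (?an y) + dst (?an z) y" by (rule fpA)
  have "dst z (?an y) + dst (?an z) y \<le> dst z (?an z) + dst (?an y) y
      \<or> dst z (?an y) + dst (?an z) y \<le> dst z y + dst (?an y) (?an z)"
    using fpD[of z "?an y" "?an z" y] .
  then have up: "dst z (?an y) + dst (?an z) y \<le> 2 * n * lam"
    using d1 d2 d3 n by (auto simp: dst_comm)
  show ?thesis using lo up d1 d2 d4 by simp
qed

lemma step_ym:
  assumes L: "Lpt z" and n: "dst z y \<le> n"
  shows "dst z ((ai ^^ Suc n) y) = dst z ((ai ^^ n) y) + lam"
proof -
  have z: "z \<in> TV d" using L unfolding Lpt_def by auto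
  define M where "M = Suc n"
  have Ml: "M * lam = lam + n * lam" unfolding M_def by simp
  have nl: "n \<le> n * lam" using lam0 by simp
  have "dst z y < M * lam" using n Ml nl lam0 by linarith
  then have AL: "dst z ((a ^^ M) y) + dst z ((ai ^^ M) y) = 2 * M * lam" by (rule axis_line[OF L])
  let ?u = "(ai ^^ M) y" and ?v = "(a ^^ M) y" and ?p = "(ai ^^ n) y"
  have uv: "dst ?u ?v = 2 * M * lam" using dist_ym_yp[of M M] by simp
  have up: "dst ?u ?p = lam" using dist_ym_ym[of n M] unfolding M_def by (simp add: dst_comm)
  have pv: "dst ?p ?v = (n + M) * lam" using dist_ym_yp .
  have upv: "dst ?u ?p + dst ?p ?v = dst ?u ?v" using up pv uv unfolding M_def by simp
  have uzv: "dst ?u z + dst z ?v = dst ?u ?v" using AL uv by (simp add: dst_comm)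
  have "dst ?u y \<le> dst ?u z + dst z y" by (rule dst_triangle)
  moreover have "dst ?u y = M * lam" using dist_ym[of M] by (simp add: dst_comm)
  ultimately have "lam \<le> dst ?u z" using n Ml nl by linarith
  then have "dst ?p z = dst ?u z - lam" using btw[OF upv uzv] up by simp
  then show ?thesis using \<open>lam \<le> dst ?u z\<close> by (simp add: dst_comm M_def)
qed

definition beta where "beta z = int (dst z ((ai ^^ (dst z y)) y)) - int (dst z y * lam)"

lemma stab:
  assumes L: "Lpt z" and n: "dst z y \<le> n"
  shows "int (dst z ((ai ^^ n) y)) = beta z + int (n * lam)"
  using n
proof (induction n rule: dec_induct)
  case base then show ?case unfolding beta_def by simp
next
  case (step n)
  then show ?case using step_ym[OF L, of n] by (simp add: algebra_simps)
qed

lemma dist_beta: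
  assumes Lz: "Lpt z" and Lw: "Lpt w" and le: "beta z \<le> beta w"
  shows "int (dst z w) = beta w - beta z"
proof -
  define n where "n = Suc (dst z y + dst w y)"
  have "n \<le> n * lam" using lam0 by simp
  then have nz: "dst z y < n * lam" "dst w y < n * lam" unfolding n_def by linarith+
  let ?u = "(ai ^^ n) y" and ?v = "(a ^^ n) y"
  have uv: "dst ?u ?v = 2 * n * lam" using dist_ym_yp[of n n] by simp
  have uz: "dst ?u z + dst z ?v = dst ?u ?v" using axis_line[OF Lz nz(1)] uv by (simp add: dst_comm)
  have uw: "dst ?u w + dst w ?v = dst ?u ?v" using axis_line[OF Lw nz(2)] uv by (simp add: dst_comm)
  have pz: "int (dst ?u z) = beta z + int (n * lam)" using stab[OF Lz, of n] unfolding n_def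
    by (simp add: dst_comm)
  have pw: "int (dst ?u w) = beta w + int (n * lam)" using stab[OF Lw, of n] unfolding n_def
    by (simp add: dst_comm)
  have "dst ?u z \<le> dst ?u w" using pz pw le by linarith
  then have "dst z w = dst ?u w - dst ?u z" by (rule btw[OF uz uw])
  then show ?thesis using pz pw \<open>dst ?u z \<le> dst ?u w\<close> by simp
qed

lemma beta_inj: "Lpt z \<Longrightarrow> Lpt w \<Longrightarrow> beta z = beta w \<Longrightarrow> z = w"
  using dist_beta[of z w] by (simp add: dst_0_iff)

lemma Lpt_yp: "Lpt ((a ^^ k) y)"
  using Lpt_map[OF Ly isom_funpow[OF a, of k]] by (simp add: funpow_swap1)

lemma Lpt_ai: "Lpt w \<Longrightarrow> Lpt (ai w)"
  using Lpt_map[OF _ ai] ai_comm by blast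

lemma Lpt_ai_pow: "Lpt w \<Longrightarrow> Lpt ((ai ^^ k) w)"
  by (induction k) (auto intro: Lpt_ai)

lemma Lpt_ym: "Lpt ((ai ^^ k) y)"
  using Lpt_ai_pow[OF Ly] .

lemma beta_yp: "beta ((a ^^ k) y) = int (k * lam)"
proof -
  define n where "n = dst ((a ^^ k) y) y"
  have "int (dst ((a ^^ k) y) ((ai ^^ n) y)) = beta ((a ^^ k) y) + int (n * lam)"
    using stab[OF Lpt_yp[of k], of n] n_def by simp
  moreover have "dst ((a ^^ k) y) ((ai ^^ n) y) = (n + k) * lam" using dist_ym_yp[of n k] by (simp add: dst_comm)
  ultimately show ?thesis by (simp add: algebra_simps)
qed

lemma beta_y: "beta y = 0"
  using beta_yp[of 0] by simp

lemma beta_ym: "beta ((ai ^^ k) y) = - int (k * lam)"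
proof -
  define n where "n = dst ((ai ^^ k) y) y"
  have n': "n = k * lam" unfolding n_def using dist_ym[of k] by (simp add: dst_comm)
  have kn: "k \<le> n" unfolding n' using lam0 by simp
  have "int (dst ((ai ^^ k) y) ((ai ^^ n) y)) = beta ((ai ^^ k) y) + int (n * lam)"
    using stab[OF Lpt_ym, of k n] n_def by simp
  moreover have "dst ((ai ^^ k) y) ((ai ^^ n) y) = (n - k) * lam" using dist_ym_ym[OF kn] .
  ultimately show ?thesis using kn by (simp add: algebra_simps of_nat_diff)
qed

lemma beta_ai:
  assumes L: "Lpt w"
  shows "beta (ai w) = beta w - int lam"
proof -
  have w: "w \<in> TV d" using L unfolding Lpt_def by auto
  define m where "m = dst (ai w) y + dst w y"
  define n where "n = Suc m"
  have s1: "int (dst (ai w) ((ai ^^ n) y)) = beta (ai w) + int (n * lam)"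
    using stab[OF Lpt_ai[OF L], of n] unfolding n_def m_def by simp
  have "dst (a (ai w)) (a ((ai ^^ n) y)) = dst (ai w) ((ai ^^ n) y)"
    using isomD(2)[OF a isomD(1)[OF ai w] aiW[OF yW]] .
  moreover have "a ((ai ^^ n) y) = (ai ^^ m) y" unfolding n_def by (simp add: inv1 aiW[OF yW])
  ultimately have e: "dst (ai w) ((ai ^^ n) y) = dst w ((ai ^^ m) y)" using inv1[OF w] by simp
  have s2: "int (dst w ((ai ^^ m) y)) = beta w + int (m * lam)"
    using stab[OF L, of m] unfolding m_def by simp
  show ?thesis using s1 s2 e unfolding n_def by (simp add: algebra_simps)
qed

lemma beta_ai_pow: "Lpt w \<Longrightarrow> beta ((ai ^^ k) w) = beta w - int (k * lam)"
proof (induction k)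
  case (Suc k)
  have "beta ((ai ^^ Suc k) w) = beta (ai ((ai ^^ k) w))" by simp
  also have "\<dots> = beta ((ai ^^ k) w) - int lam" using beta_ai[OF Lpt_ai_pow[OF Suc.prems]] .
  finally show ?case using Suc by (simp add: algebra_simps)
qed simp

context
  fixes b assumes b: "isom d b" and bc: "\<And>x. x \<in> TV d \<Longrightarrow> b (a x) = a (b x)"
begin

lemma b_ai: "x \<in> TV d \<Longrightarrow> b (ai x) = ai (b x)"
proof -
  assume x: "x \<in> TV d"
  have aix: "ai x \<in> TV d" using isomD(1)[OF ai x] .
  have "b x = a (b (ai x))" using bc[OF aix] inv1[OF x] by simp
  then have "ai (b x) = ai (a (b (ai x)))" by simp
  also have "\<dots> = b (ai x)" using inv2[OF isomD(1)[OF b aix]] .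
  finally show ?thesis by simp
qed

lemma beta_comm:
  assumes L: "Lpt z"
  shows "beta (b z) = beta z + beta (b y)"
proof -
  have z: "z \<in> TV d" using L unfolding Lpt_def by auto
  have Lbz: "Lpt (b z)" using Lpt_map[OF L b bc] .
  have Lby: "Lpt (b y)" using Lpt_map[OF Ly b bc] .
  define n where "n = dst z y + nat \<bar>beta (b y) - beta (b z)\<bar>"
  have s1: "int (dst z ((ai ^^ n) y)) = beta z + int (n * lam)"
    using stab[OF L, of n] unfolding n_def by simp
  have bn: "b ((ai ^^ n) y) = (ai ^^ n) (b y)"
    using comm_pow[of ai b, OF isomD(1)[OF ai] isomD(1)[OF b] _ yW] b_ai by (metis)
  have e: "dst z ((ai ^^ n) y) = dst (b z) ((ai ^^ n) (b y))"
    using isomD(2)[OF b z aiW[OF yW, of n]] bn by simp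
  have Lw: "Lpt ((ai ^^ n) (b y))" using Lpt_ai_pow[OF Lby] .
  have bw: "beta ((ai ^^ n) (b y)) = beta (b y) - int (n * lam)" using beta_ai_pow[OF Lby] .
  have "n \<le> n * lam" using lam0 by simp
  then have "int n \<le> int (n * lam)" by linarith
  moreover have "beta (b y) - beta (b z) \<le> int n" unfolding n_def by simp
  ultimately have "beta ((ai ^^ n) (b y)) \<le> beta (b z)" using bw by linarith
  then have "int (dst ((ai ^^ n) (b y)) (b z)) = beta (b z) - beta ((ai ^^ n) (b y))"
    using dist_beta[OF Lw Lbz] by simp
  then show ?thesis using s1 e bw by (simp add: dst_comm)
qed

lemma Lpt_bpow: "Lpt ((b ^^ n) y)"
  by (induction n) (auto simp: Ly intro: Lpt_map[OF _ b bc])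

lemma beta_bpow: "beta ((b ^^ n) y) = int n * beta (b y)"
proof (induction n)
  case 0 then show ?case using beta_y by simp
next
  case (Suc n)
  have "beta ((b ^^ Suc n) y) = beta (b ((b ^^ n) y))" by simp
  also have "\<dots> = beta ((b ^^ n) y) + beta (b y)" using beta_comm[OF Lpt_bpow] .
  finally show ?case using Suc by (simp add: algebra_simps)
qed

lemma translation:
  "\<exists>s::int. (b ^^ lam) y = (if 0 \<le> s then (a ^^ nat s) y else (ai ^^ nat (- s)) y)
      \<and> (s = 0 \<longrightarrow> b y = y)
      \<and> ((if 0 \<le> s then (a ^^ nat s) y else (ai ^^ nat (- s)) y) = y \<longrightarrow> s = 0)"
proof -
  define s where "s = beta (b y)"
  let ?p = "(if 0 \<le> s then (a ^^ nat s) y else (ai ^^ nat (- s)) y)"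
  have Lp: "Lpt ?p" using Lpt_yp Lpt_ym by simp
  have bp: "beta ?p = s * int lam"
    using beta_yp[of "nat s"] beta_ym[of "nat (- s)"] by (simp add: algebra_simps)
  have "beta ((b ^^ lam) y) = beta ?p" using beta_bpow[of lam] bp unfolding s_def by simp
  then have 1: "(b ^^ lam) y = ?p" using beta_inj[OF Lpt_bpow Lp] by blast
  have 2: "s = 0 \<longrightarrow> b y = y"
  proof
    assume "s = 0"
    then have "beta (b y) = beta y" using beta_y unfolding s_def by simp
    then show "b y = y" using beta_inj[OF Lpt_map[OF Ly b bc] Ly] by blast
  qed
  have 3: "?p = y \<longrightarrow> s = 0" using bp beta_y lam0 by auto
  show ?thesis using 1 2 3 by blast
qed

end

end

lemma tadj_sym: "tadj d v w \<Longrightarrow> tadj d w v"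
  unfolding tadj_def by blast

lemma tadj_neq: "tadj d v w \<Longrightarrow> v \<noteq> w"
  using tadj_iff[of d v w] by auto

lemma edge_in_Ev: "tadj d v w \<Longrightarrow> {v, w} \<in> Ev d v"
  unfolding Ev_def TE_def by blast

lemma Ev_form: "e \<in> Ev d v \<Longrightarrow> \<exists>w. tadj d v w \<and> e = {v, w}"
  unfolding Ev_def TE_def by (auto dest: tadj_sym simp: insert_commute)

lemma Ev_sub: "e \<in> Ev d v \<Longrightarrow> e \<subseteq> TV d"
  using Ev_form[of e d v] unfolding tadj_def by auto

lemma AutT_edge: "g \<in> AutT d \<Longrightarrow> v \<in> TV d \<Longrightarrow> e \<in> Ev d v \<Longrightarrow> g ` e \<in> Ev d (g v)"
proof -
  assume g: "g \<in> AutT d" and v: "v \<in> TV d" and e: "e \<in> Ev d v"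
  obtain w where w: "tadj d v w" "e = {v, w}" using Ev_form[OF e] by blast
  have "tadj d (g v) (g w)" using AutT_D(4)[OF g] w(1) v unfolding tadj_def by blast
  then show ?thesis using w edge_in_Ev by simp
qed

lemma BijGroup_mult: "g \<in> Bij S \<Longrightarrow> f \<in> Bij S \<Longrightarrow> g \<otimes>\<^bsub>BijGroup S\<^esub> f = compose S g f"
  by (simp add: BijGroup_def)

lemma BijGroup_carrier: "carrier (BijGroup S) = Bij S"
  by (simp add: BijGroup_def)

lemma BijGroup_one: "\<one>\<^bsub>BijGroup S\<^esub> = (\<lambda>x\<in>S. x)"
  by (simp add: BijGroup_def)

locale col =
  fixes d :: nat and c :: "nat list set \<Rightarrow> nat" and F :: "(nat \<Rightarrow> nat) set"
  assumes legal: "legal_coloring d c" and Fsub: "subgroup F (BijGroup (Omg d))"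
    and free: "acts_freely (Omg d) F"
begin

lemma cbij: "v \<in> TV d \<Longrightarrow> bij_betw c (Ev d v) (Omg d)"
  using legal unfolding legal_coloring_def by blast

lemma c_in: "v \<in> TV d \<Longrightarrow> e \<in> Ev d v \<Longrightarrow> c e \<in> Omg d"
  using cbij bij_betwE by blast

lemma c_inj: "v \<in> TV d \<Longrightarrow> e \<in> Ev d v \<Longrightarrow> e' \<in> Ev d v \<Longrightarrow> c e = c e' \<Longrightarrow> e = e'"
  using cbij unfolding bij_betw_def inj_on_def by blast

lemma c_surj: assumes "v \<in> TV d" "\<alpha> \<in> Omg d" shows "\<exists>e\<in>Ev d v. c e = \<alpha>"
proof -
  have "\<alpha> \<in> c ` Ev d v" using cbij[OF assms(1)] assms(2) unfolding bij_betw_def by simp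
  then show ?thesis by blast
qed

lemma the_edge: assumes "v \<in> TV d" "e \<in> Ev d v" shows "(THE e'. e' \<in> Ev d v \<and> c e' = c e) = e"
proof (rule the_equality)
  show "e \<in> Ev d v \<and> c e = c e" using assms by simp
next
  fix e' assume "e' \<in> Ev d v \<and> c e' = c e"
  then show "e' = e" using c_inj[OF assms(1) _ assms(2)] by blast
qed

lemma locperm_val: "v \<in> TV d \<Longrightarrow> e \<in> Ev d v \<Longrightarrow> locperm d c g v (c e) = c (g ` e)"
  unfolding locperm_def using the_edge c_in by simp

lemma F_Bij: "F \<subseteq> Bij (Omg d)"
  using subgroup.subset[OF Fsub] by (simp add: BijGroup_def)

lemma free_eq:
  assumes s: "s \<in> F" and s': "s' \<in> F" and \<alpha>: "\<alpha> \<in> Omg d" and eq: "s \<alpha> = s' \<alpha>" and \<beta>: "\<beta> \<in> Omg d"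
  shows "s \<beta> = s' \<beta>"
proof -
  interpret G: group "BijGroup (Omg d)" by (rule group_BijGroup)
  have sB: "s \<in> Bij (Omg d)" "s' \<in> Bij (Omg d)" using s s' F_Bij by auto
  define h where "h = inv\<^bsub>BijGroup (Omg d)\<^esub> s' \<otimes>\<^bsub>BijGroup (Omg d)\<^esub> s"
  have hF: "h \<in> F" unfolding h_def using s s' Fsub
    by (simp add: subgroup.m_closed subgroup.m_inv_closed)
  have invs': "inv\<^bsub>BijGroup (Omg d)\<^esub> s' = (\<lambda>x \<in> Omg d. inv_into (Omg d) s' x)"
    using inv_BijGroup[OF sB(2)] .
  have invB: "inv\<^bsub>BijGroup (Omg d)\<^esub> s' \<in> Bij (Omg d)" using invs' restrict_inv_into_Bij[OF sB(2)] by simp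
  have bs': "bij_betw s' (Omg d) (Omg d)" "bij_betw s (Omg d) (Omg d)" using sB unfolding Bij_def by auto
  have hB: "h = compose (Omg d) (inv\<^bsub>BijGroup (Omg d)\<^esub> s') s"
    unfolding h_def using BijGroup_mult[OF invB sB(1)] .
  have hx: "h x = inv_into (Omg d) s' (s x)" if x: "x \<in> Omg d" for x
  proof -
    have sx: "s x \<in> Omg d" using bs'(2) x bij_betwE by blast
    have "h x = (inv\<^bsub>BijGroup (Omg d)\<^esub> s') (s x)" unfolding hB compose_def using x by simp
    then show ?thesis unfolding invs' using sx by simp
  qed
  have "h \<alpha> = \<alpha>" using hx[OF \<alpha>] eq bs'(1) \<alpha> by (simp add: bij_betw_def inv_into_f_f)
  then have "h \<beta> = \<beta>" using free hF \<alpha> \<beta> unfolding acts_freely_def by blast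
  then have "inv_into (Omg d) s' (s \<beta>) = \<beta>" using hx[OF \<beta>] by simp
  moreover have "s \<beta> \<in> s' ` Omg d"
  proof -
    have "s \<beta> \<in> Omg d" using bs'(2) \<beta> bij_betwE by blast
    then show ?thesis using bs'(1) unfolding bij_betw_def by simp
  qed
  ultimately show ?thesis by (metis f_inv_into_f)
qed

lemma prop_fix:
  assumes g: "g \<in> AutT d" and v: "v \<in> TV d" "g v = v" and p: "tadj d v p" "g p = p"
    and sF: "locperm d c g v \<in> F" and z: "tadj d v z"
  shows "g z = z"
proof -
  let ?s = "locperm d c g v"
  have ep: "{v, p} \<in> Ev d v" using edge_in_Ev[OF p(1)] .
  have ez: "{v, z} \<in> Ev d v" using edge_in_Ev[OF z] .
  have "?s (c {v, p}) = c {v, p}" using locperm_val[OF v(1) ep, of g] v p by simp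
  then have "?s (c {v, z}) = c {v, z}" using free sF c_in[OF v(1) ep] c_in[OF v(1) ez]
    unfolding acts_freely_def by blast
  then have "c (g ` {v, z}) = c {v, z}" using locperm_val[OF v(1) ez, of g] by simp
  moreover have "g ` {v, z} \<in> Ev d v" using AutT_edge[OF g v(1) ez] v by simp
  ultimately have "g ` {v, z} = {v, z}" using c_inj[OF v(1) _ ez] by blast
  then have "{v, g z} = {v, z}" using v by simp
  moreover have "z \<noteq> v" using tadj_neq[OF z] by simp
  ultimately show ?thesis by (metis doubleton_eq_iff)
qed

lemma det:
  assumes g: "g \<in> AutT d" and g': "g' \<in> AutT d" and p: "p \<in> TV d" "g p = g' p"
    and p': "tadj d p p'" "g p' = g' p'"
    and sF: "locperm d c g p \<in> F" and sF': "locperm d c g' p \<in> F" and w: "tadj d p w"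
  shows "g w = g' w"
proof -
  have ep: "{p, p'} \<in> Ev d p" using edge_in_Ev[OF p'(1)] .
  have ew: "{p, w} \<in> Ev d p" using edge_in_Ev[OF w] .
  have "locperm d c g p (c {p, p'}) = locperm d c g' p (c {p, p'})"
    using locperm_val[OF p(1) ep, of g] locperm_val[OF p(1) ep, of g'] p p' by simp
  then have "locperm d c g p (c {p, w}) = locperm d c g' p (c {p, w})"
    using free_eq[OF sF sF' c_in[OF p(1) ep] _ c_in[OF p(1) ew]] by blast
  then have "c (g ` {p, w}) = c (g' ` {p, w})"
    using locperm_val[OF p(1) ew, of g] locperm_val[OF p(1) ew, of g'] by simp
  moreover have "g ` {p, w} \<in> Ev d (g p)" using AutT_edge[OF g p(1) ew] .
  moreover have "g' ` {p, w} \<in> Ev d (g p)" using AutT_edge[OF g' p(1) ew] p by simp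
  ultimately have "g ` {p, w} = g' ` {p, w}" using c_inj[OF AutT_D(1)[OF g p(1)]] by blast
  then have "{g p, g w} = {g p, g' w}" using p by simp
  moreover have "g w \<noteq> g p"
  proof
    assume "g w = g p"
    then have "w = p" using AutT_D(2)[OF g] p(1) w unfolding tadj_def inj_on_def by blast
    then show False using tadj_neq[OF w] by simp
  qed
  ultimately show ?thesis by (metis doubleton_eq_iff)
qed

end

lemma AutT_Bij: "g \<in> AutT d \<Longrightarrow> g \<in> Bij (TV d)"
  unfolding AutT_def by auto

lemma ball_finite: "finite {x \<in> TV d. dst r0 x \<le> m}"
proof -
  have "{x \<in> TV d. dst r0 x \<le> m} \<subseteq> {xs. set xs \<subseteq> Omg d \<and> length xs \<le> length r0 + m}"
  proof
    fix x assume x: "x \<in> {x \<in> TV d. dst r0 x \<le> m}"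
    have "length x \<le> length r0 + m" using x lcpl_le1[of r0 x] lcpl_le2[of r0 x] unfolding dst_def by auto
    then show "x \<in> {xs. set xs \<subseteq> Omg d \<and> length xs \<le> length r0 + m}" using x unfolding TV_def by auto
  qed
  moreover have "finite {xs. set xs \<subseteq> Omg d \<and> length xs \<le> length r0 + m}"
    by (rule finite_lists_length_le) (simp add: Omg_def)
  ultimately show ?thesis by (rule finite_subset)
qed

context col
begin

lemma locperm_Bij:
  assumes g: "g \<in> AutT d" and v: "v \<in> TV d"
  shows "locperm d c g v \<in> Bij (Omg d)"
proof -
  let ?s = "locperm d c g v"
  have gv: "g v \<in> TV d" using AutT_D(1)[OF g v] .
  have into: "?s \<alpha> \<in> Omg d" if aO: "\<alpha> \<in> Omg d" for \<alpha>
  proof -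
    obtain e where e: "e \<in> Ev d v" "c e = \<alpha>" using c_surj[OF v aO] by blast
    show ?thesis using locperm_val[OF v e(1), of g] e c_in[OF gv AutT_edge[OF g v e(1)]] by simp
  qed
  have inj: "inj_on ?s (Omg d)"
  proof (rule inj_onI)
    fix \<alpha> \<alpha>' assume a: "\<alpha> \<in> Omg d" "\<alpha>' \<in> Omg d" "?s \<alpha> = ?s \<alpha>'"
    obtain e where e: "e \<in> Ev d v" "c e = \<alpha>" using c_surj[OF v a(1)] by blast
    obtain e' where e': "e' \<in> Ev d v" "c e' = \<alpha>'" using c_surj[OF v a(2)] by blast
    have "c (g ` e) = c (g ` e')" using a(3) locperm_val[OF v e(1), of g] locperm_val[OF v e'(1), of g] e e' by simp
    then have "g ` e = g ` e'" using c_inj[OF gv AutT_edge[OF g v e(1)] AutT_edge[OF g v e'(1)]] by blast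
    then have "e = e'" using inj_on_image_eq_iff[OF AutT_D(2)[OF g] Ev_sub[OF e(1)] Ev_sub[OF e'(1)]] by blast
    then show "\<alpha> = \<alpha>'" using e e' by simp
  qed
  have fin: "finite (Omg d)" by (simp add: Omg_def)
  have "?s ` Omg d = Omg d" using endo_inj_surj[OF fin _ inj] into by blast
  then have "bij_betw ?s (Omg d) (Omg d)" using inj unfolding bij_betw_def by simp
  moreover have "?s \<in> extensional (Omg d)" unfolding locperm_def by simp
  ultimately show ?thesis unfolding Bij_def by simp
qed

lemma cocycle:
  assumes g: "g \<in> AutT d" and h: "h \<in> AutT d" and v: "v \<in> TV d"
  shows "locperm d c (compose (TV d) g h) v = compose (Omg d) (locperm d c g (h v)) (locperm d c h v)"
proof (rule ext)
  fix \<alpha>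
  show "locperm d c (compose (TV d) g h) v \<alpha> = compose (Omg d) (locperm d c g (h v)) (locperm d c h v) \<alpha>"
  proof (cases "\<alpha> \<in> Omg d")
    case False then show ?thesis unfolding locperm_def compose_def by simp
  next
    case True
    obtain e where e: "e \<in> Ev d v" "c e = \<alpha>" using c_surj[OF v True] by blast
    have hv: "h v \<in> TV d" using AutT_D(1)[OF h v] .
    have he: "h ` e \<in> Ev d (h v)" using AutT_edge[OF h v e(1)] .
    have "compose (TV d) g h ` e = g ` h ` e" using Ev_sub[OF e(1)] unfolding compose_def by auto
    then have l: "locperm d c (compose (TV d) g h) v \<alpha> = c (g ` h ` e)"
      using locperm_val[OF v e(1)] e by simp
    have r: "compose (Omg d) (locperm d c g (h v)) (locperm d c h v) \<alpha> = c (g ` h ` e)"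
      using True locperm_val[OF v e(1), of h] locperm_val[OF hv he, of g] e unfolding compose_def by simp
    show ?thesis using l r by simp
  qed
qed

lemma locperm_one:
  assumes v: "v \<in> TV d"
  shows "locperm d c (\<lambda>x\<in>TV d. x) v = (\<lambda>x\<in>Omg d. x)"
proof (rule ext)
  fix \<alpha>
  show "locperm d c (\<lambda>x\<in>TV d. x) v \<alpha> = (\<lambda>x\<in>Omg d. x) \<alpha>"
  proof (cases "\<alpha> \<in> Omg d")
    case False then show ?thesis unfolding locperm_def by simp
  next
    case True
    obtain e where e: "e \<in> Ev d v" "c e = \<alpha>" using c_surj[OF v True] by blast
    have "(\<lambda>x\<in>TV d. x) ` e = e" using Ev_sub[OF e(1)] by auto
    then show ?thesis using locperm_val[OF v e(1)] e True by simp
  qed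
qed

end

context col
begin

definition sing where "sing g = {v \<in> TV d. locperm d c g v \<notin> F}"

lemma locfin:
  assumes H: "subgroup H (BijGroup (TV d))" and HA: "H \<subseteq> AutT d"
    and Hf: "\<forall>h\<in>H. finite (sing h)"
    and T: "finite T" "T \<subseteq> H" and r0: "r0 \<in> TV d" and To: "\<forall>t\<in>T. t r0 = r0"
  shows "finite (generate (BijGroup (TV d)) T)"
proof -
  interpret G: group "BijGroup (TV d)" by (rule group_BijGroup)
  interpret O: group "BijGroup (Omg d)" by (rule group_BijGroup)
  have HB: "\<And>h. h \<in> H \<Longrightarrow> h \<in> Bij (TV d)" using subgroup.subset[OF H] BijGroup_carrier by blast
  define nb where "nb t = Max (insert 0 (dst r0 ` sing t))" for t
  define n where "n = (\<Sum>t\<in>T. nb t)"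
  have nbT: "dst r0 v \<le> n" if t: "t \<in> T" and v: "v \<in> sing t" for t v
  proof -
    have "dst r0 v \<le> nb t" unfolding nb_def using Hf T(2) t v by (intro Max_ge) auto
    also have "nb t \<le> n" unfolding n_def using t T(1) by (intro member_le_sum) auto
    finally show ?thesis .
  qed
  define Q where "Q = {g \<in> H. g r0 = r0 \<and> (\<forall>v\<in>sing g. dst r0 v \<le> n)}"
  have QH: "Q \<subseteq> H" unfolding Q_def by auto
  have subQ: "subgroup Q (BijGroup (TV d))"
  proof (rule subgroup.intro)
    show "Q \<subseteq> carrier (BijGroup (TV d))" using QH subgroup.subset[OF H] by blast
  next
    fix g h assume g: "g \<in> Q" and h: "h \<in> Q"
    have gH: "g \<in> H" "g r0 = r0" "\<forall>v\<in>sing g. dst r0 v \<le> n" using g unfolding Q_def by auto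
    have hH: "h \<in> H" "h r0 = r0" "\<forall>v\<in>sing h. dst r0 v \<le> n" using h unfolding Q_def by auto
    have gA: "g \<in> AutT d" and hA: "h \<in> AutT d" using gH hH HA by auto
    have prod: "g \<otimes>\<^bsub>BijGroup (TV d)\<^esub> h = compose (TV d) g h" using BijGroup_mult[OF HB HB] gH hH by blast
    have "g \<otimes>\<^bsub>BijGroup (TV d)\<^esub> h \<in> H" using gH hH subgroup.m_closed[OF H] by blast
    moreover have "(compose (TV d) g h) r0 = r0" using gH hH r0 unfolding compose_def by simp
    moreover have "dst r0 v \<le> n" if v: "v \<in> sing (compose (TV d) g h)" for v
    proof -
      have vW: "v \<in> TV d" using v unfolding sing_def by auto
      have hv: "h v \<in> TV d" using AutT_D(1)[OF hA vW] .
      have B1: "locperm d c g (h v) \<in> Bij (Omg d)" using locperm_Bij[OF gA hv] .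
      have B2: "locperm d c h v \<in> Bij (Omg d)" using locperm_Bij[OF hA vW] .
      have eq: "locperm d c (compose (TV d) g h) v = locperm d c g (h v) \<otimes>\<^bsub>BijGroup (Omg d)\<^esub> locperm d c h v"
        using cocycle[OF gA hA vW] BijGroup_mult[OF B1 B2] by simp
      have "\<not> (locperm d c g (h v) \<in> F \<and> locperm d c h v \<in> F)"
        using v eq subgroup.m_closed[OF Fsub] unfolding sing_def by auto
      then have "h v \<in> sing g \<or> v \<in> sing h" unfolding sing_def using vW hv by auto
      then show ?thesis
      proof
        assume "h v \<in> sing g"
        then have "dst r0 (h v) \<le> n" using gH by blast
        moreover have "dst r0 (h v) = dst r0 v" using AutT_dst[OF hA r0 vW] hH by simp
        ultimately show ?thesis by simp
      qed (use hH in blast)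
    qed
    ultimately show "g \<otimes>\<^bsub>BijGroup (TV d)\<^esub> h \<in> Q" unfolding Q_def prod by blast
  next
    have one: "\<one>\<^bsub>BijGroup (TV d)\<^esub> \<in> H" using subgroup.one_closed[OF H] .
    have "locperm d c (\<lambda>x\<in>TV d. x) v \<in> F" if "v \<in> TV d" for v
      using locperm_one[OF that] subgroup.one_closed[OF Fsub] BijGroup_one by metis
    then have "sing (\<lambda>x\<in>TV d. x) = {}" unfolding sing_def by auto
    then show "\<one>\<^bsub>BijGroup (TV d)\<^esub> \<in> Q" unfolding Q_def using one r0 BijGroup_one by (simp add: BijGroup_one)
  next
    fix g assume g: "g \<in> Q"
    have gH: "g \<in> H" "g r0 = r0" "\<forall>v\<in>sing g. dst r0 v \<le> n" using g unfolding Q_def by auto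
    define gi where "gi = inv\<^bsub>BijGroup (TV d)\<^esub> g"
    have giH: "gi \<in> H" unfolding gi_def using subgroup.m_inv_closed[OF H gH(1)] .
    have gA: "g \<in> AutT d" and giA: "gi \<in> AutT d" using gH giH HA by auto
    have gB: "g \<in> Bij (TV d)" using HB gH by blast
    have gi_eq: "gi = (\<lambda>x\<in>TV d. inv_into (TV d) g x)" unfolding gi_def using inv_BijGroup[OF gB] .
    have "gi r0 = r0" unfolding gi_eq using r0 gH(2) AutT_D(2)[OF gA] by (metis inv_into_f_f restrict_apply')
    moreover have "dst r0 v \<le> n" if v: "v \<in> sing gi" for v
    proof -
      have vW: "v \<in> TV d" using v unfolding sing_def by auto
      have giv: "gi v \<in> TV d" using AutT_D(1)[OF giA vW] .
      have B1: "locperm d c g (gi v) \<in> Bij (Omg d)" using locperm_Bij[OF gA giv] .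
      have B2: "locperm d c gi v \<in> Bij (Omg d)" using locperm_Bij[OF giA vW] .
      have "g \<otimes>\<^bsub>BijGroup (TV d)\<^esub> gi = \<one>\<^bsub>BijGroup (TV d)\<^esub>" unfolding gi_def
        using G.r_inv gB BijGroup_carrier by blast
      then have "compose (TV d) g gi = (\<lambda>x\<in>TV d. x)" using BijGroup_mult[OF gB HB[OF giH]] BijGroup_one by simp
      then have "locperm d c g (gi v) \<otimes>\<^bsub>BijGroup (Omg d)\<^esub> locperm d c gi v = \<one>\<^bsub>BijGroup (Omg d)\<^esub>"
        using cocycle[OF gA giA vW] locperm_one[OF vW] BijGroup_mult[OF B1 B2] BijGroup_one by metis
      then have inveq: "inv\<^bsub>BijGroup (Omg d)\<^esub> (locperm d c gi v) = locperm d c g (gi v)"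
        using O.inv_equality B1 B2 BijGroup_carrier by metis
      have "gi v \<in> sing g"
      proof (rule ccontr)
        assume "gi v \<notin> sing g"
        then have "locperm d c g (gi v) \<in> F" using giv unfolding sing_def by auto
        then have "inv\<^bsub>BijGroup (Omg d)\<^esub> (inv\<^bsub>BijGroup (Omg d)\<^esub> (locperm d c gi v)) \<in> F"
          using inveq subgroup.m_inv_closed[OF Fsub] by metis
        then have "locperm d c gi v \<in> F" using O.inv_inv B2 BijGroup_carrier by metis
        then show False using v unfolding sing_def by auto
      qed
      then have "dst r0 (gi v) \<le> n" using gH by blast
      moreover have "dst r0 (gi v) = dst r0 v" using AutT_dst[OF giA r0 vW] \<open>gi r0 = r0\<close> by simp
      ultimately show ?thesis by simp
    qed
    ultimately show "inv\<^bsub>BijGroup (TV d)\<^esub> g \<in> Q" unfolding Q_def gi_def[symmetric] using giH by blast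
  qed
  have TQ: "T \<subseteq> Q" unfolding Q_def using T(2) To nbT by blast
  have genQ: "generate (BijGroup (TV d)) T \<subseteq> Q" using G.generate_subgroup_incl[OF TQ subQ] .
  define B where "B = {x \<in> TV d. dst r0 x \<le> Suc n}"
  have Bfin: "finite B" unfolding B_def by (rule ball_finite)
  have inj: "inj_on (\<lambda>g. restrict g B) Q"
  proof (rule inj_onI)
    fix g g' assume g: "g \<in> Q" and g': "g' \<in> Q" and eq: "restrict g B = restrict g' B"
    have gH: "g \<in> H" "g r0 = r0" "\<forall>v\<in>sing g. dst r0 v \<le> n" using g unfolding Q_def by auto
    have gH': "g' \<in> H" "g' r0 = r0" "\<forall>v\<in>sing g'. dst r0 v \<le> n" using g' unfolding Q_def by auto
    have gA: "g \<in> AutT d" "g' \<in> AutT d" using gH gH' HA by auto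
    have main: "\<forall>x\<in>TV d. dst r0 x = k \<longrightarrow> g x = g' x" for k
    proof (induction k rule: less_induct)
      case (less k)
      show ?case
      proof (intro ballI impI)
        fix x assume x: "x \<in> TV d" "dst r0 x = k"
        show "g x = g' x"
        proof (cases "k \<le> Suc n")
          case True
          then have "x \<in> B" unfolding B_def using x by simp
          then show ?thesis using fun_cong[OF eq, of x] by simp
        next
          case False
          then obtain r where r: "k = Suc r" "Suc n \<le> r" by (metis Suc_le_D not_less_eq_eq)
          obtain p where p: "p \<in> TV d" "dst r0 p = r" "dst p x = 1"
            using geo_point[OF r0 x(1), of r] x r by auto
          obtain p' where p': "p' \<in> TV d" "dst r0 p' = r - 1" "dst p' p = 1"
            using geo_point[OF r0 p(1), of "r - 1"] p r by auto
          have e1: "g p = g' p" using less.IH[of r] p r by auto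
          have e2: "g p' = g' p'" using less.IH[of "r - 1"] p' r by auto
          have "p \<notin> sing g" "p \<notin> sing g'" using gH(3) gH'(3) p r by auto
          then have F1: "locperm d c g p \<in> F" "locperm d c g' p \<in> F" using p unfolding sing_def by auto
          have t1: "tadj d p p'" using tadj_iff p p' by (simp add: dst_comm)
          have t2: "tadj d p x" using tadj_iff p x by simp
          show ?thesis using det[OF gA(1) gA(2) p(1) e1 t1 e2 F1 t2] .
        qed
      qed
    qed
    have "g \<in> extensional (TV d)" "g' \<in> extensional (TV d)" using HB gH(1) gH'(1) Bij_imp_extensional by blast+
    then show "g = g'" using main by (intro extensionalityI) auto
  qed
  have img: "(\<lambda>g. restrict g B) ` Q \<subseteq> (\<Pi>\<^sub>E x\<in>B. B)"
  proof
    fix f assume "f \<in> (\<lambda>g. restrict g B) ` Q"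
    then obtain g where g: "g \<in> Q" "f = restrict g B" by blast
    have gA: "g \<in> AutT d" "g r0 = r0" using g HA unfolding Q_def by auto
    have "g x \<in> B" if "x \<in> B" for x
      using that AutT_D(1)[OF gA(1)] AutT_dst[OF gA(1) r0] gA(2) unfolding B_def by auto
    then show "f \<in> (\<Pi>\<^sub>E x\<in>B. B)" using g by auto
  qed
  have "finite (\<Pi>\<^sub>E x\<in>B. B)" using Bfin by (intro finite_PiE) auto
  then have "finite ((\<lambda>g. restrict g B) ` Q)" using img finite_subset by blast
  then have "finite Q" using inj finite_imageD by blast
  then show ?thesis using genQ finite_subset by blast
qed

end

lemma isom_tadj: "isom d g \<Longrightarrow> tadj d x z \<Longrightarrow> tadj d (g x) (g z)"
  using tadj_iff[of d x z] tadj_iff[of d "g x" "g z"] isomD[of d g] by metis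

lemma periodic_pt:
  assumes fin: "finite N" and ne: "N \<noteq> {}" and sub: "N \<subseteq> TV d" and g: "isom d g"
    and inv: "\<And>w. w \<in> N \<Longrightarrow> g w \<in> N"
  shows "\<exists>w\<in>N. \<exists>j>0. (g ^^ j) w = w"
proof -
  obtain w where w: "w \<in> N" using ne by blast
  have inN: "(g ^^ i) w \<in> N" for i by (induction i) (auto simp: w inv)
  have "\<not> inj_on (\<lambda>i. (g ^^ i) w) {0..card N}"
  proof
    assume "inj_on (\<lambda>i. (g ^^ i) w) {0..card N}"
    then have "card {0..card N} \<le> card N" using card_inj_on_le[OF _ _ fin] inN by blast
    then show False by simp
  qed
  then obtain i j where ij: "i \<in> {0..card N}" "j \<in> {0..card N}" "i \<noteq> j" "(g ^^ i) w = (g ^^ j) w"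
    unfolding inj_on_def by blast
  have key: "i < j \<Longrightarrow> (g ^^ i) w = (g ^^ j) w \<Longrightarrow> (g ^^ (j - i)) w = w" for i j
  proof -
    assume "i < j" "(g ^^ i) w = (g ^^ j) w"
    then have "(g ^^ i) ((g ^^ (j - i)) w) = (g ^^ i) w"
      by (metis funpow_add le_add_diff_inverse less_imp_le o_apply)
    moreover have "w \<in> TV d" using w sub by blast
    ultimately show ?thesis using isom_inj[OF isom_funpow[OF g] funpow_TV[OF g]] by blast
  qed
  show ?thesis
  proof (cases "i < j")
    case True then show ?thesis using key ij w by (intro bexI[of _ w]) (auto intro!: exI[of _ "j - i"])
  next
    case False then have "j < i" using ij by simp
    then show ?thesis using key ij w by (intro bexI[of _ w]) (auto intro!: exI[of _ "i - j"])
  qed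
qed

context col
begin

lemma ell_comm_trivial:
  assumes k: "k \<in> AutT d" and kf: "finite (sing k)" and a: "isom d a" and ax: "axpt d a y"
    and o: "r0 \<in> TV d" "k r0 = r0" and comm: "\<And>x. x \<in> TV d \<Longrightarrow> k (a x) = a (k x)"
  shows "\<forall>x\<in>TV d. k x = x"
proof -
  have ki: "isom d k" using AutT_isom[OF k] .
  have ao: "a r0 \<in> TV d" "a r0 \<noteq> r0" using isomD(1)[OF a o(1)] axis_no_periodic[OF a ax o(1), of 1] by auto
  have kao: "k (a r0) = a r0" using comm[OF o(1)] o by simp
  have fixnb: "\<exists>p. tadj d w p \<and> k p = p" if w: "w \<in> TV d" "k w = w" for w
  proof -
    obtain u where u: "u \<in> TV d" "k u = u" "u \<noteq> w" using ao kao o by metis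
    have "0 < dst w u" using u dst_0_iff[of w u] by auto
    then obtain p where p: "p \<in> TV d" "dst w p = 1" "dst p u = dst w u - 1"
      using geo_point[OF w(1) u(1), of 1] by auto
    have "dst w p + dst p u = dst w u" using p \<open>0 < dst w u\<close> by simp
    then have "k p = p" using isom_fix_geo[OF ki w u(1,2) p(1)] by simp
    moreover have "tadj d w p" using tadj_iff w p by simp
    ultimately show ?thesis by blast
  qed
  define N where "N = {w \<in> TV d. k w = w \<and> (\<exists>z. tadj d w z \<and> k z \<noteq> z)}"
  have Nsing: "N \<subseteq> sing k"
  proof
    fix w assume w: "w \<in> N"
    then have wW: "w \<in> TV d" "k w = w" unfolding N_def by auto
    obtain p where p: "tadj d w p" "k p = p" using fixnb[OF wW] by blast
    obtain z where z: "tadj d w z" "k z \<noteq> z" using w unfolding N_def by auto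
    show "w \<in> sing k"
    proof (rule ccontr)
      assume "w \<notin> sing k"
      then have "locperm d c k w \<in> F" using wW unfolding sing_def by auto
      then have "k z = z" using prop_fix[OF k wW p] z(1) by blast
      then show False using z by simp
    qed
  qed
  have Nfin: "finite N" using finite_subset[OF Nsing kf] .
  have Ninv: "a w \<in> N" if w: "w \<in> N" for w
  proof -
    have wW: "w \<in> TV d" "k w = w" using w unfolding N_def by auto
    obtain z where z: "tadj d w z" "k z \<noteq> z" using w unfolding N_def by auto
    have zW: "z \<in> TV d" using z(1) unfolding tadj_def by auto
    have "tadj d (a w) (a z)" using isom_tadj[OF a z(1)] .
    moreover have "k (a z) \<noteq> a z"
    proof
      assume "k (a z) = a z"
      then have "a (k z) = a z" using comm[OF zW] by simp
      then show False using isom_inj[OF a isomD(1)[OF ki zW] zW] z(2) by blast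
    qed
    moreover have "k (a w) = a w" using comm[OF wW(1)] wW by simp
    ultimately show ?thesis unfolding N_def using isomD(1)[OF a wW(1)] by blast
  qed
  have "N = {}"
  proof (rule ccontr)
    assume "N \<noteq> {}"
    then obtain w j where "w \<in> N" "0 < j" "(a ^^ j) w = w"
      using periodic_pt[OF Nfin _ _ a Ninv] unfolding N_def by blast
    then show False using axis_no_periodic[OF a ax] unfolding N_def by blast
  qed
  have "\<forall>x\<in>TV d. dst r0 x = n \<longrightarrow> k x = x" for n
  proof (induction n)
    case 0 then show ?case using o by (auto simp: dst_0_iff)
  next
    case (Suc r)
    show ?case
    proof (intro ballI impI)
      fix x assume x: "x \<in> TV d" "dst r0 x = Suc r"
      obtain p where p: "p \<in> TV d" "dst r0 p = r" "dst p x = 1"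
        using geo_point[OF o(1) x(1), of r] x by auto
      have kp: "k p = p" using Suc p by blast
      have "p \<notin> N" using \<open>N = {}\<close> by simp
      moreover have "tadj d p x" using tadj_iff p x by simp
      ultimately show "k x = x" unfolding N_def using p kp by blast
    qed
  qed
  then show ?thesis by blast
qed

end

context group
begin
lemma hA: "x \<in> carrier G \<Longrightarrow> t \<in> carrier G \<Longrightarrow> x \<otimes> inv t \<otimes> t = x"
  by (simp add: m_assoc)
lemma hB: "x \<in> carrier G \<Longrightarrow> t \<in> carrier G \<Longrightarrow> x \<otimes> t \<otimes> inv t = x"
  by (simp add: m_assoc)
lemmas gsimps = m_assoc[symmetric] hA hB inv_mult_group
end

lemma nil_TV: "[] \<in> TV d" unfolding TV_def by simp

definition par :: "(nat list \<Rightarrow> nat list) \<Rightarrow> bool" where "par g \<longleftrightarrow> even (length (g []))"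

lemma par_pt:
  assumes g: "g \<in> AutT d" and x: "x \<in> TV d"
  shows "even (length (g x) + length x) \<longleftrightarrow> par g"
proof -
  have "dst (g x) (g []) = dst x []" using AutT_dst[OF g x nil_TV] .
  also have "dst x [] = length x" unfolding dst_def by simp
  finally have "even (length x + length (g x) + length (g []))"
    using dst_parity[of "g x" "g []"] by simp
  then show ?thesis unfolding par_def by presburger
qed

lemma par_dst: "g \<in> AutT d \<Longrightarrow> par g \<Longrightarrow> x \<in> TV d \<Longrightarrow> even (dst x (g x))"
  using par_pt[of g d x] dst_parity[of x "g x"] by presburger

lemma par_comp: "g \<in> AutT d \<Longrightarrow> h \<in> AutT d \<Longrightarrow> par (compose (TV d) g h) \<longleftrightarrow> (par g \<longleftrightarrow> par h)"
  using par_pt[of g d "h []"] AutT_D(1)[of h d "[]"] nil_TV[of d] unfolding par_def compose_def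
  by (simp) presburger

lemma par_one: "par (\<lambda>x\<in>TV d. x)" unfolding par_def using nil_TV by simp

lemma even_fix:
  assumes g: "g \<in> AutT d" and p: "par g" and nh: "\<forall>y. \<not> axpt d g y"
  shows "\<exists>m\<in>TV d. g m = m"
proof -
  let ?x = "[] :: nat list"
  have x: "?x \<in> TV d" by (rule nil_TV)
  have gx: "g ?x \<in> TV d" using AutT_D(1)[OF g x] .
  obtain k where k: "dst ?x (g ?x) = 2 * k" using par_dst[OF g p x] by (metis evenE)
  obtain m where m: "m \<in> TV d" "dst ?x m = k" "dst m (g ?x) = dst ?x (g ?x) - k"
    using geo_point[OF x gx, of k] k by auto
  show ?thesis
  proof (rule ccontr)
    assume "\<not> ?thesis"
    then have "g m \<noteq> m" using m by blast
    then have pos: "0 < dst m (g m)" using dst_0_iff[of m "g m"] by auto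
    have "dst m (g (g m)) = 2 * dst m (g m)"
      by (rule midpoint_lemma[OF AutT_isom[OF g] x m(1) m(2)]) (use m k pos in auto)
    then have "axpt d g m" unfolding axpt_def using m pos by simp
    then show False using nh by blast
  qed
qed


locale schr = group G for G :: "(nat list \<Rightarrow> nat list) monoid" (structure) +
  fixes d :: nat and H T
  assumes G: "G = BijGroup (TV d)" and H: "subgroup H G" and HA: "H \<subseteq> AutT d"
    and T: "finite T" "T \<subseteq> H"
begin

lemma HB: "x \<in> H \<Longrightarrow> x \<in> Bij (TV d)" using subgroup.subset[OF H] G BijGroup_carrier by blast
lemma Hc: "x \<in> H \<Longrightarrow> x \<in> carrier G" using subgroup.subset[OF H] by blast

lemma par_mult: "x \<in> H \<Longrightarrow> y \<in> H \<Longrightarrow> par (x \<otimes> y) \<longleftrightarrow> (par x \<longleftrightarrow> par y)"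
  using BijGroup_mult[OF HB HB] par_comp[of x d y] HA G by auto

lemma par_oneG: "par \<one>" using G par_one BijGroup_one by metis

lemma par_inv: "x \<in> H \<Longrightarrow> par (inv x) \<longleftrightarrow> par x"
proof -
  assume x: "x \<in> H"
  have "x \<otimes> inv x = \<one>" using Hc[OF x] by simp
  then show ?thesis using par_mult[OF x subgroup.m_inv_closed[OF H x]] par_oneG by auto
qed

lemma KH: "generate G T \<subseteq> H" using generate_subgroup_incl[OF T(2) H] .

lemma schreier2:
  "\<exists>T0. finite T0 \<and> T0 \<subseteq> generate G T \<and> (\<forall>s\<in>T0. par s) \<and> (finite (generate G T0) \<longrightarrow> finite (generate G T))"
proof (cases "\<forall>s\<in>T. par s")
  case True
  have "T \<subseteq> generate G T"
  proof
    fix x assume "x \<in> T" then show "x \<in> generate G T" by (rule generate.incl)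
  qed
  then show ?thesis using T(1) True by blast
next
  case False
  then obtain t where t: "t \<in> T" "\<not> par t" by blast
  have tH: "t \<in> H" using t T(2) by blast
  have tc: "t \<in> carrier G" "inv t \<in> carrier G" using Hc[OF tH] by auto
  have TK: "T \<subseteq> generate G T"
  proof
    fix x assume "x \<in> T" then show "x \<in> generate G T" by (rule generate.incl)
  qed
  have tK1: "t \<in> generate G T" using TK t by blast
  have Tc: "T \<subseteq> carrier G" using T(2) subgroup.subset[OF H] by blast
  have tK: "t \<in> generate G T" "inv t \<in> generate G T" using tK1 generate_m_inv_closed[OF Tc tK1] by auto
  define Te where "Te = {s\<in>T. par s}"
  define To where "To = {s\<in>T. \<not> par s}"
  define T0 where "T0 = Te \<union> (\<lambda>s. s \<otimes> inv t) ` To \<union> (\<lambda>s. t \<otimes> s) ` To \<union> (\<lambda>s. t \<otimes> s \<otimes> inv t) ` Te"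
  have fTe: "finite Te" "finite To" unfolding Te_def To_def using T(1) by simp_all
  have fin: "finite T0" unfolding T0_def using fTe by simp
  have T0K: "T0 \<subseteq> generate G T"
  proof
    fix x assume "x \<in> T0"
    then consider "x \<in> Te" | s where "s \<in> To" "x = s \<otimes> inv t" | s where "s \<in> To" "x = t \<otimes> s"
      | s where "s \<in> Te" "x = t \<otimes> s \<otimes> inv t" unfolding T0_def by blast
    then show "x \<in> generate G T"
    proof cases
      case 1 then show ?thesis using TK unfolding Te_def by blast
    next
      case (2 s) then have "s \<in> generate G T" using TK unfolding To_def by blast
      then show ?thesis using 2 generate.eng[OF _ tK(2)] by blast
    next
      case (3 s) then have "s \<in> generate G T" using TK unfolding To_def by blast
      then show ?thesis using 3 generate.eng[OF tK(1)] by blast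
    next
      case (4 s) then have "s \<in> generate G T" using TK unfolding Te_def by blast
      then show ?thesis using 4 generate.eng[OF generate.eng[OF tK(1)] tK(2)] by blast
    qed
  qed
  have Kc: "\<And>x. x \<in> generate G T \<Longrightarrow> x \<in> carrier G" using KH Hc by blast
  have KH': "\<And>x. x \<in> generate G T \<Longrightarrow> x \<in> H" using KH by blast
  have par0: "\<forall>s\<in>T0. par s"
  proof
    fix s assume s: "s \<in> T0"
    have sH: "\<And>s. s \<in> T \<Longrightarrow> s \<in> H" using T(2) by blast
    have itH: "inv t \<in> H" using subgroup.m_inv_closed[OF H tH] .
    have pit: "\<not> par (inv t)" using par_inv[OF tH] t by simp
    from s consider "s \<in> Te" | u where "u \<in> To" "s = u \<otimes> inv t" | u where "u \<in> To" "s = t \<otimes> u"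
      | u where "u \<in> Te" "s = t \<otimes> u \<otimes> inv t" unfolding T0_def by blast
    then show "par s"
    proof cases
      case 1 then show ?thesis unfolding Te_def by blast
    next
      case (2 u) then show ?thesis using par_mult[OF sH itH] pit unfolding To_def by auto
    next
      case (3 u) then show ?thesis using par_mult[OF tH sH] t unfolding To_def by auto
    next
      case (4 u)
      have "t \<otimes> u \<in> H" using subgroup.m_closed[OF H tH sH] 4 unfolding Te_def by blast
      then show ?thesis using 4 par_mult[OF _ itH] par_mult[OF tH sH] t pit unfolding Te_def by auto
    qed
  qed
  define Gn where "Gn = generate G T0"
  have T0c: "T0 \<subseteq> carrier G" using T0K Kc by blast
  have Gc: "\<And>x. x \<in> Gn \<Longrightarrow> x \<in> carrier G" unfolding Gn_def using generate_in_carrier[OF T0c] by blast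
  have Gm: "\<And>x y. x \<in> Gn \<Longrightarrow> y \<in> Gn \<Longrightarrow> x \<otimes> y \<in> Gn" unfolding Gn_def by (rule generate.eng)
  have Gi: "\<And>x. x \<in> Gn \<Longrightarrow> inv x \<in> Gn" unfolding Gn_def using generate_m_inv_closed[OF T0c] by blast
  have G0: "\<And>x. x \<in> T0 \<Longrightarrow> x \<in> Gn" unfolding Gn_def by (rule generate.incl)
  let ?P = "\<lambda>x. (par x \<longrightarrow> x \<in> Gn \<and> t \<otimes> x \<otimes> inv t \<in> Gn) \<and> (\<not> par x \<longrightarrow> x \<otimes> inv t \<in> Gn \<and> t \<otimes> x \<in> Gn)"
  have P: "?P x" if x: "x \<in> generate G T" for x
    using x
  proof (induction rule: generate.induct)
    case one
    have "\<one> \<in> Gn" unfolding Gn_def by (rule generate.one)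
    moreover have "t \<otimes> \<one> \<otimes> inv t = \<one>" using tc by simp
    ultimately show ?case using par_oneG by simp
  next
    case (incl h)
    have hc: "h \<in> carrier G" using incl T(2) Hc by blast
    show ?case
    proof (cases "par h")
      case True
      then have "h \<in> T0" "t \<otimes> h \<otimes> inv t \<in> T0" unfolding T0_def Te_def using incl by auto
      then show ?thesis using True G0 by auto
    next
      case False
      then have "h \<otimes> inv t \<in> T0" "t \<otimes> h \<in> T0" unfolding T0_def To_def using incl by auto
      then show ?thesis using False G0 by auto
    qed
  next
    case (inv h)
    have hH: "h \<in> H" using inv T(2) by blast
    have hc: "h \<in> carrier G" using Hc[OF hH] .
    have pi: "par (inv h) \<longleftrightarrow> par h" using par_inv[OF hH] .
    show ?case
    proof (cases "par h")
      case True
      then have a: "h \<in> T0" "t \<otimes> h \<otimes> inv t \<in> T0" unfolding T0_def Te_def using inv by auto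
      have "inv (t \<otimes> h \<otimes> inv t) = t \<otimes> inv h \<otimes> inv t" using hc tc by (simp add: gsimps)
      then show ?thesis using True pi a G0 Gi by (metis)
    next
      case False
      then have a: "h \<otimes> inv t \<in> T0" "t \<otimes> h \<in> T0" unfolding T0_def To_def using inv by auto
      have e1: "inv (t \<otimes> h) = inv h \<otimes> inv t" using hc tc by (simp add: gsimps)
      have e2: "inv (h \<otimes> inv t) = t \<otimes> inv h" using hc tc by (simp add: gsimps)
      show ?thesis using False pi a G0 Gi e1 e2 by (metis)
    qed
  next
    case (eng h1 h2)
    have c1: "h1 \<in> carrier G" "h2 \<in> carrier G" using eng.hyps Kc by auto
    have pm: "par (h1 \<otimes> h2) \<longleftrightarrow> (par h1 \<longleftrightarrow> par h2)" using par_mult KH' eng.hyps by blast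
    have cs: "t \<otimes> h1 \<otimes> inv t \<in> carrier G" "t \<otimes> h2 \<otimes> inv t \<in> carrier G" "t \<otimes> h1 \<in> carrier G"
      "t \<otimes> h2 \<in> carrier G" "h1 \<otimes> inv t \<in> carrier G" "h2 \<otimes> inv t \<in> carrier G" using c1 tc by auto
    consider "par h1" "par h2" | "par h1" "\<not> par h2" | "\<not> par h1" "par h2" | "\<not> par h1" "\<not> par h2" by blast
    then show ?case
    proof cases
      case 1
      have "(t \<otimes> h1 \<otimes> inv t) \<otimes> (t \<otimes> h2 \<otimes> inv t) = t \<otimes> (h1 \<otimes> h2) \<otimes> inv t"
        using c1 tc by (simp add: gsimps)
      then show ?thesis using 1 eng.IH pm Gm by metis
    next
      case 2
      have e1: "h1 \<otimes> (h2 \<otimes> inv t) = (h1 \<otimes> h2) \<otimes> inv t" using c1 tc by (simp add: gsimps)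
      have e2: "(t \<otimes> h1 \<otimes> inv t) \<otimes> (t \<otimes> h2) = t \<otimes> (h1 \<otimes> h2)" using c1 tc by (simp add: gsimps)
      show ?thesis using 2 eng.IH pm Gm e1 e2 by metis
    next
      case 3
      have e1: "(h1 \<otimes> inv t) \<otimes> (t \<otimes> h2 \<otimes> inv t) = (h1 \<otimes> h2) \<otimes> inv t" using c1 tc by (simp add: gsimps)
      have e2: "(t \<otimes> h1) \<otimes> h2 = t \<otimes> (h1 \<otimes> h2)" using c1 tc by (simp add: gsimps)
      show ?thesis using 3 eng.IH pm Gm e1 e2 by metis
    next
      case 4
      have e1: "(h1 \<otimes> inv t) \<otimes> (t \<otimes> h2) = h1 \<otimes> h2" using c1 tc by (simp add: gsimps)
      have e2: "(t \<otimes> h1) \<otimes> (h2 \<otimes> inv t) = t \<otimes> (h1 \<otimes> h2) \<otimes> inv t" using c1 tc by (simp add: gsimps)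
      show ?thesis using 4 eng.IH pm Gm e1 e2 by metis
    qed
  qed
  have "generate G T \<subseteq> Gn \<union> (\<lambda>z. z \<otimes> t) ` Gn"
  proof
    fix x assume x: "x \<in> generate G T"
    show "x \<in> Gn \<union> (\<lambda>z. z \<otimes> t) ` Gn"
    proof (cases "par x")
      case True then show ?thesis using P[OF x] by blast
    next
      case False
      then have "x \<otimes> inv t \<in> Gn" using P[OF x] by blast
      moreover have "x = (x \<otimes> inv t) \<otimes> t" using Kc[OF x] tc by (simp add: hA)
      ultimately show ?thesis by blast
    qed
  qed
  then have "finite Gn \<longrightarrow> finite (generate G T)" using finite_subset by blast
  then show ?thesis using fin T0K par0 unfolding Gn_def by blast
qed

end

lemma axpt_cong:
  assumes "\<And>x. x \<in> TV d \<Longrightarrow> f x = g x" "\<And>x. x \<in> TV d \<Longrightarrow> f x \<in> TV d" "axpt d f y"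
  shows "axpt d g y"
proof -
  have y: "y \<in> TV d" using assms(3) unfolding axpt_def by auto
  have "g y = f y" "g (g y) = f (f y)" using assms(1,2) y by auto
  then show ?thesis using assms(3) unfolding axpt_def by simp
qed

context col
begin

lemma fg_inf_hyp:
  assumes H: "subgroup H (BijGroup (TV d))" and HA: "H \<subseteq> AutT d"
    and Hf: "\<forall>h\<in>H. finite (sing h)" and T: "finite T" "T \<subseteq> H"
    and inf: "infinite (generate (BijGroup (TV d)) T)"
  shows "\<exists>g\<in>generate (BijGroup (TV d)) T. \<exists>y. axpt d g y"
proof (rule ccontr)
  assume nh: "\<not> ?thesis"
  interpret G: group "BijGroup (TV d)" by (rule group_BijGroup)
  interpret S: schr "BijGroup (TV d)" d H T
    unfolding schr_def schr_axioms_def using group_BijGroup H HA T by blast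
  define K where "K = generate (BijGroup (TV d)) T"
  have KH: "K \<subseteq> H" unfolding K_def using S.KH .
  obtain T0 where T0: "finite T0" "T0 \<subseteq> K" "\<forall>s\<in>T0. par s"
    "finite (generate (BijGroup (TV d)) T0) \<longrightarrow> finite K"
    using S.schreier2 unfolding K_def by blast
  have Tc: "T \<subseteq> carrier (BijGroup (TV d))" using T(2) subgroup.subset[OF H] by blast
  have Ksub: "subgroup K (BijGroup (TV d))" unfolding K_def using G.generate_is_subgroup[OF Tc] .
  have T0A: "\<And>s. s \<in> T0 \<Longrightarrow> s \<in> AutT d" using T0(2) KH HA by blast
  have T0B: "\<And>s. s \<in> T0 \<Longrightarrow> s \<in> Bij (TV d)" using T0A AutT_Bij by blast
  have noax: "\<And>g y. g \<in> K \<Longrightarrow> \<not> axpt d g y" using nh unfolding K_def by blast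
  have fixne: "Fix d s \<noteq> {}" if s: "s \<in> T0" for s
  proof -
    obtain m where "m \<in> TV d" "s m = m" using even_fix[OF T0A[OF s]] T0(3) s noax T0(2) by blast
    then show ?thesis unfolding Fix_def by blast
  qed
  have pair: "Fix d s \<inter> Fix d s' \<noteq> {}" if s: "s \<in> T0" and s': "s' \<in> T0" for s s'
  proof
    assume disj: "Fix d s \<inter> Fix d s' = {}"
    obtain y where y: "axpt d (s \<circ> s') y"
      using serre_pair[OF AutT_isom[OF T0A[OF s]] AutT_isom[OF T0A[OF s']] fixne[OF s] fixne[OF s'] disj] by blast
    have "s \<otimes>\<^bsub>BijGroup (TV d)\<^esub> s' = compose (TV d) s s'" using BijGroup_mult[OF T0B[OF s] T0B[OF s']] .
    moreover have "s \<otimes>\<^bsub>BijGroup (TV d)\<^esub> s' \<in> K" using subgroup.m_closed[OF Ksub] s s' T0(2) by blast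
    moreover have "axpt d (compose (TV d) s s') y"
      by (rule axpt_cong[OF _ _ y]) (auto simp: compose_def intro: AutT_D(1)[OF T0A[OF s]] AutT_D(1)[OF T0A[OF s']])
    ultimately show False using noax by metis
  qed
  have "finite (generate (BijGroup (TV d)) T0)"
  proof (cases "T0 = {}")
    case True then show ?thesis using G.generate_empty by simp
  next
    case False
    have "(\<Inter>s\<in>T0. Fix d s) \<noteq> {}"
      by (rule helly[OF T0(1) False, of d]) (use pair fix_cvx AutT_isom T0A in auto)
    then obtain r0 where r0: "\<forall>s\<in>T0. r0 \<in> Fix d s" by blast
    have r0W: "r0 \<in> TV d" using r0 False unfolding Fix_def by blast
    show ?thesis
      by (rule locfin[OF H HA Hf T0(1) _ r0W]) (use T0(2) KH r0 in \<open>auto simp: Fix_def\<close>)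
  qed
  then have "finite K" using T0(4) by blast
  then show False using inf unfolding K_def by simp
qed

end

locale mctx = col d c F + group G
  for d c F and G :: "(nat list \<Rightarrow> nat list) monoid" (structure) +
  fixes H
  assumes G_def: "G = BijGroup (TV d)" and H: "subgroup H G" and HA: "H \<subseteq> AutT d"
    and Hf: "\<forall>h\<in>H. finite (sing h)"
begin

lemma carr: "carrier G = Bij (TV d)" using G_def BijGroup_carrier by simp

lemma mult_app: "x \<in> carrier G \<Longrightarrow> y \<in> carrier G \<Longrightarrow> w \<in> TV d \<Longrightarrow> (x \<otimes> y) w = x (y w)"
  using BijGroup_mult[of x "TV d" y] carr G_def by (simp add: compose_def)

lemma one_app: "w \<in> TV d \<Longrightarrow> \<one> w = w"
  unfolding G_def BijGroup_one by simp

lemma inv_app: "x \<in> carrier G \<Longrightarrow> w \<in> TV d \<Longrightarrow> x ((inv x) w) = w \<and> (inv x) (x w) = w"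
  using mult_app[of x "inv x" w] mult_app[of "inv x" x w] one_app[of w] by simp

lemma pow_app: "x \<in> carrier G \<Longrightarrow> w \<in> TV d \<Longrightarrow> (x [^] (n::nat)) w = (x ^^ n) w"
proof (induction n arbitrary: w)
  case (Suc n)
  have xw: "x w \<in> TV d" using Suc.prems carr Bij_imp_funcset by blast
  have "(x [^] Suc n) w = (x [^] n) (x w)" using mult_app[of "x [^] n" x w] Suc.prems by simp
  also have "\<dots> = (x ^^ n) (x w)" using Suc.IH[OF Suc.prems(1) xw] .
  finally show ?case by (simp add: funpow_swap1)
qed (simp add: one_app)

lemma ext_eq: "x \<in> carrier G \<Longrightarrow> y \<in> carrier G \<Longrightarrow> (\<And>w. w \<in> TV d \<Longrightarrow> x w = y w) \<Longrightarrow> x = y"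
  using carr Bij_imp_extensional extensionalityI by metis

lemma comm_pow: "x \<in> carrier G \<Longrightarrow> y \<in> carrier G \<Longrightarrow> y \<otimes> x = x \<otimes> y \<Longrightarrow> y \<otimes> x [^] (n::nat) = x [^] n \<otimes> y"
proof (induction n)
  case (Suc n)
  have "y \<otimes> x [^] Suc n = (y \<otimes> x [^] n) \<otimes> x" using Suc.prems by (simp add: m_assoc)
  also have "\<dots> = x [^] n \<otimes> (y \<otimes> x)" using Suc by (simp add: m_assoc)
  also have "\<dots> = x [^] Suc n \<otimes> y" using Suc.prems by (simp add: m_assoc)
  finally show ?case .
qed simp

lemma sub_pow: "subgroup K G \<Longrightarrow> x \<in> K \<Longrightarrow> x [^] (n::nat) \<in> K"
  by (induction n) (auto simp: subgroup.one_closed subgroup.m_closed)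

lemma HAut: "x \<in> H \<Longrightarrow> x \<in> AutT d" using HA by blast
lemma Hc: "x \<in> H \<Longrightarrow> x \<in> carrier G" using subgroup.subset[OF H] by blast

lemma comm_app: "x \<in> carrier G \<Longrightarrow> y \<in> carrier G \<Longrightarrow> x \<otimes> y = y \<otimes> x \<Longrightarrow> w \<in> TV d \<Longrightarrow> x (y w) = y (x w)"
  using mult_app by metis

lemma main_asym:
  assumes A: "subgroup A' G" "A' \<subseteq> H" and B: "subgroup B' G" "B' \<subseteq> H"
    and comm: "\<forall>a\<in>A'. \<forall>b\<in>B'. a \<otimes> b = b \<otimes> a" and triv: "A' \<inter> B' \<subseteq> {\<one>}"
    and TA: "finite TA" "TA \<subseteq> A'" "generate G TA = A'" and inf: "infinite A'"
    and b0: "b \<in> B'" "b \<noteq> \<one>"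
  shows False
proof -
  have TAH: "TA \<subseteq> H" using TA A by blast
  obtain a y where a: "a \<in> A'" and ax: "axpt d a y"
    using fg_inf_hyp[OF H[unfolded G_def] HA Hf TA(1) TAH] inf TA(3) G_def by auto
  have aH: "a \<in> H" using a A by blast
  have ac: "a \<in> carrier G" using Hc[OF aH] .
  define ai where "ai = inv a"
  have aiA: "ai \<in> A'" unfolding ai_def using subgroup.m_inv_closed[OF A(1) a] .
  have aiH: "ai \<in> H" using aiA A by blast
  have aic: "ai \<in> carrier G" using Hc[OF aiH] .
  have yW: "y \<in> TV d" using ax unfolding axpt_def by auto
  interpret L: axl d a ai y
    by (unfold_locales) (use AutT_isom HAut aH aiH inv_app ac ax in \<open>auto simp: ai_def\<close>)
  have bH: "b \<in> H" using b0 B by blast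
  have bc: "b \<in> carrier G" using Hc[OF bH] .
  have bcomm: "\<And>x. x \<in> TV d \<Longrightarrow> b (a x) = a (b x)"
    using comm_app[OF bc ac] comm a b0 by metis
  obtain s where s: "(b ^^ L.lam) y = (if 0 \<le> s then (a ^^ nat s) y else (ai ^^ nat (- s)) y)"
    "s = 0 \<longrightarrow> b y = y" "(if 0 \<le> s then (a ^^ nat s) y else (ai ^^ nat (- s)) y) = y \<longrightarrow> s = 0"
    using L.translation[OF AutT_isom[OF HAut[OF bH]] bcomm] by blast
  define u where "u = (if 0 \<le> s then a [^] nat s else ai [^] nat (- s))"
  have uA: "u \<in> A'" and uy: "u y = (if 0 \<le> s then (a ^^ nat s) y else (ai ^^ nat (- s)) y)"
  proof (atomize (full), cases "0 \<le> s")
    case True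
    have "u = a [^] nat s" unfolding u_def using True by (rule if_P)
    moreover have "(if 0 \<le> s then (a ^^ nat s) y else (ai ^^ nat (- s)) y) = (a ^^ nat s) y"
      using True by (rule if_P)
    ultimately show "u \<in> A' \<and> u y = (if 0 \<le> s then (a ^^ nat s) y else (ai ^^ nat (- s)) y)"
      using sub_pow[OF A(1) a, of "nat s"] pow_app[OF ac yW, of "nat s"] by metis
  next
    case False
    have "u = ai [^] nat (- s)" unfolding u_def using False by (rule if_not_P)
    moreover have "(if 0 \<le> s then (a ^^ nat s) y else (ai ^^ nat (- s)) y) = (ai ^^ nat (- s)) y"
      using False by (rule if_not_P)
    ultimately show "u \<in> A' \<and> u y = (if 0 \<le> s then (a ^^ nat s) y else (ai ^^ nat (- s)) y)"
      using sub_pow[OF A(1) aiA, of "nat (- s)"] pow_app[OF aic yW, of "nat (- s)"] by metis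
  qed
  have uc: "u \<in> carrier G" using uA A Hc by blast
  define v where "v = b [^] L.lam"
  have vB: "v \<in> B'" unfolding v_def using sub_pow[OF B(1) b0(1)] .
  have vc: "v \<in> carrier G" using vB B Hc by blast
  have vy: "v y = u y" unfolding v_def using pow_app[OF bc yW] s(1) uy by simp
  define k where "k = inv u \<otimes> v"
  have kH: "k \<in> H" unfolding k_def using uA vB A B subgroup.m_closed[OF H] subgroup.m_inv_closed[OF H] by blast
  have kc: "k \<in> carrier G" using Hc[OF kH] .
  have ky: "k y = y" unfolding k_def using mult_app[OF inv_closed[OF uc] vc yW] vy inv_app[OF uc yW] by simp
  have aia: "a \<otimes> ai = ai \<otimes> a" unfolding ai_def using ac by simp
  have au: "a \<otimes> u = u \<otimes> a"
  proof (cases "0 \<le> s")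
    case True
    have "u = a [^] nat s" unfolding u_def using True by (rule if_P)
    then show ?thesis using comm_pow[OF ac ac, of "nat s"] by metis
  next
    case False
    have "u = ai [^] nat (- s)" unfolding u_def using False by (rule if_not_P)
    then show ?thesis using comm_pow[OF aic ac aia, of "nat (- s)"] by metis
  qed
  have av: "a \<otimes> v = v \<otimes> a" unfolding v_def using comm_pow[OF bc ac] comm a b0 by metis
  have aiu: "a \<otimes> inv u = inv u \<otimes> a"
  proof -
    have "a \<otimes> inv u = inv u \<otimes> (u \<otimes> a) \<otimes> inv u" using ac uc by (simp add: m_assoc[symmetric])
    also have "\<dots> = inv u \<otimes> (a \<otimes> u) \<otimes> inv u" using au by simp
    also have "\<dots> = inv u \<otimes> a" using ac uc by (simp add: m_assoc)
    finally show ?thesis .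
  qed
  have ak: "a \<otimes> k = k \<otimes> a"
  proof -
    have "a \<otimes> k = (a \<otimes> inv u) \<otimes> v" unfolding k_def using ac uc vc by (simp add: m_assoc)
    also have "\<dots> = inv u \<otimes> (a \<otimes> v)" using aiu ac uc vc by (simp add: m_assoc)
    also have "\<dots> = inv u \<otimes> (v \<otimes> a)" using av by simp
    also have "\<dots> = k \<otimes> a" unfolding k_def using ac uc vc by (simp add: m_assoc)
    finally show ?thesis .
  qed
  have kcomm: "\<And>x. x \<in> TV d \<Longrightarrow> k (a x) = a (k x)" using comm_app[OF ac kc ak] by metis
  have "k = \<one>"
  proof (rule ccontr)
    assume kn: "k \<noteq> \<one>"
    have kf: "finite (sing k)" using Hf kH by blast
    have "\<forall>x\<in>TV d. k x = x"
      using ell_comm_trivial[OF HAut[OF kH] kf AutT_isom[OF HAut[OF aH]] ax yW ky kcomm] .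
    then have "k = \<one>" using ext_eq[OF kc one_closed] one_app by simp
    then show False using kn by simp
  qed
  then have "v = u"
  proof -
    assume k1: "k = \<one>"
    have "v = u \<otimes> (inv u \<otimes> v)" using uc vc by (simp add: m_assoc[symmetric])
    also have "\<dots> = u" using k1 uc unfolding k_def by simp
    finally show ?thesis .
  qed
  then have "u \<in> A' \<inter> B'" using uA vB by simp
  then have u1: "u = \<one>" using triv by blast
  then have "u y = y" using one_app yW by simp
  then have "(if 0 \<le> s then (a ^^ nat s) y else (ai ^^ nat (- s)) y) = y" using uy by simp
  then have "s = 0" using s(3) by blast
  then have by0: "b y = y" using s(2) by simp
  have bf: "finite (sing b)" using Hf bH by blast
  have "\<forall>x\<in>TV d. b x = x"
    using ell_comm_trivial[OF HAut[OF bH] bf AutT_isom[OF HAut[OF aH]] ax yW by0 bcomm] .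
  then have "b = \<one>" using ext_eq[OF bc one_closed] one_app by simp
  then show False using b0 by simp
qed

end

context mctx
begin

lemma final:
  fixes A :: "'a monoid" and B :: "'b monoid"
  assumes fg: "\<exists>S. finite S \<and> S \<subseteq> H \<and> generate G S = H"
    and gA: "group A" and gB: "group B"
    and ntA: "carrier A \<noteq> {\<one>\<^bsub>A\<^esub>}" and ntB: "carrier B \<noteq> {\<one>\<^bsub>B\<^esub>}"
    and iso: "G\<lparr>carrier := H\<rparr> \<cong> A \<times>\<times> B"
  shows "finite H"
proof (rule ccontr)
  assume infH: "infinite H"
  interpret A: group A by (rule gA)
  interpret B: group B by (rule gB)
  obtain S where S: "finite S" "S \<subseteq> H" "generate G S = H" using fg by blast
  obtain \<phi> where \<phi>: "\<phi> \<in> iso (G\<lparr>carrier := H\<rparr>) (A \<times>\<times> B)" using iso unfolding is_iso_def by blast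
  have gG': "group (G\<lparr>carrier := H\<rparr>)" using subgroup.subgroup_is_group[OF H is_group] .
  have gAB: "group (A \<times>\<times> B)" using DirProd_group[OF gA gB] .
  have gh: "group_hom (G\<lparr>carrier := H\<rparr>) (A \<times>\<times> B) \<phi>"
    using \<phi> gG' gAB unfolding iso_def group_hom_def group_hom_axioms_def by auto
  have bij: "bij_betw \<phi> H (carrier A \<times> carrier B)" using \<phi> unfolding iso_def by simp
  have \<phi>c: "\<And>x. x \<in> H \<Longrightarrow> \<phi> x \<in> carrier A \<times> carrier B" using bij bij_betwE by blast
  have \<phi>inj: "\<And>x y. x \<in> H \<Longrightarrow> y \<in> H \<Longrightarrow> \<phi> x = \<phi> y \<Longrightarrow> x = y"
    using bij unfolding bij_betw_def inj_on_def by blast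
  define \<psi> where "\<psi> = inv_into H \<phi>"
  have \<psi>: "\<And>p. p \<in> carrier A \<times> carrier B \<Longrightarrow> \<psi> p \<in> H \<and> \<phi> (\<psi> p) = p"
    unfolding \<psi>_def using bij by (metis bij_betw_def inv_into_into f_inv_into_f)
  have \<phi>m: "\<And>x y. x \<in> H \<Longrightarrow> y \<in> H \<Longrightarrow>
      \<phi> (x \<otimes> y) = (fst (\<phi> x) \<otimes>\<^bsub>A\<^esub> fst (\<phi> y), snd (\<phi> x) \<otimes>\<^bsub>B\<^esub> snd (\<phi> y))"
    using group_hom.hom_mult[OF gh] by (simp add: mult_DirProd')
  have \<phi>1: "\<phi> \<one> = (\<one>\<^bsub>A\<^esub>, \<one>\<^bsub>B\<^esub>)" using group_hom.hom_one[OF gh] by simp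
  have \<phi>i: "\<And>x. x \<in> H \<Longrightarrow> \<phi> (inv x) = (inv\<^bsub>A\<^esub> fst (\<phi> x), inv\<^bsub>B\<^esub> snd (\<phi> x))"
  proof -
    fix x assume x: "x \<in> H"
    have "\<phi> (inv\<^bsub>G\<lparr>carrier := H\<rparr>\<^esub> x) = inv\<^bsub>A \<times>\<times> B\<^esub> \<phi> x" using group_hom.hom_inv[OF gh] x by simp
    moreover have "inv\<^bsub>G\<lparr>carrier := H\<rparr>\<^esub> x = inv x" using m_inv_consistent[OF H x] .
    moreover have "\<phi> x = (fst (\<phi> x), snd (\<phi> x))" by simp
    ultimately show "\<phi> (inv x) = (inv\<^bsub>A\<^esub> fst (\<phi> x), inv\<^bsub>B\<^esub> snd (\<phi> x))"
      using inv_DirProd[OF gA gB] \<phi>c[OF x] by (metis mem_Times_iff)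
  qed
  have Hm: "\<And>x y. x \<in> H \<Longrightarrow> y \<in> H \<Longrightarrow> x \<otimes> y \<in> H" using subgroup.m_closed[OF H] by blast
  have Hi: "\<And>x. x \<in> H \<Longrightarrow> inv x \<in> H" using subgroup.m_inv_closed[OF H] by blast
  have H1: "\<one> \<in> H" using subgroup.one_closed[OF H] .
  define A' where "A' = {h\<in>H. snd (\<phi> h) = \<one>\<^bsub>B\<^esub>}"
  define B' where "B' = {h\<in>H. fst (\<phi> h) = \<one>\<^bsub>A\<^esub>}"
  have subA: "subgroup A' G"
  proof (rule subgroup.intro)
    show "A' \<subseteq> carrier G" unfolding A'_def using Hc by blast
    show "\<And>x y. x \<in> A' \<Longrightarrow> y \<in> A' \<Longrightarrow> x \<otimes> y \<in> A'" unfolding A'_def using Hm \<phi>m by auto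
    show "\<one> \<in> A'" unfolding A'_def using H1 \<phi>1 by simp
    show "\<And>x. x \<in> A' \<Longrightarrow> inv x \<in> A'" unfolding A'_def using Hi \<phi>i by auto
  qed
  have subB: "subgroup B' G"
  proof (rule subgroup.intro)
    show "B' \<subseteq> carrier G" unfolding B'_def using Hc by blast
    show "\<And>x y. x \<in> B' \<Longrightarrow> y \<in> B' \<Longrightarrow> x \<otimes> y \<in> B'" unfolding B'_def using Hm \<phi>m by auto
    show "\<one> \<in> B'" unfolding B'_def using H1 \<phi>1 by simp
    show "\<And>x. x \<in> B' \<Longrightarrow> inv x \<in> B'" unfolding B'_def using Hi \<phi>i by auto
  qed
  have AH: "A' \<subseteq> H" and BH: "B' \<subseteq> H" unfolding A'_def B'_def by auto
  have comm: "\<forall>a\<in>A'. \<forall>b\<in>B'. a \<otimes> b = b \<otimes> a"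
  proof (intro ballI)
    fix a b assume a: "a \<in> A'" and b: "b \<in> B'"
    have aH: "a \<in> H" and bH: "b \<in> H" using a b AH BH by auto
    have "\<phi> (a \<otimes> b) = \<phi> (b \<otimes> a)" using \<phi>m[OF aH bH] \<phi>m[OF bH aH] a b \<phi>c[OF aH] \<phi>c[OF bH]
      unfolding A'_def B'_def by auto
    then show "a \<otimes> b = b \<otimes> a" using \<phi>inj Hm aH bH by blast
  qed
  have triv: "A' \<inter> B' \<subseteq> {\<one>}"
  proof
    fix h assume "h \<in> A' \<inter> B'"
    then have "h \<in> H" "\<phi> h = \<phi> \<one>" unfolding A'_def B'_def using \<phi>1 by (auto simp: prod_eq_iff)
    then show "h \<in> {\<one>}" using \<phi>inj H1 by blast
  qed
  define p1 where "p1 h = \<psi> (fst (\<phi> h), \<one>\<^bsub>B\<^esub>)" for h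
  define p2 where "p2 h = \<psi> (\<one>\<^bsub>A\<^esub>, snd (\<phi> h))" for h
  have p1: "p1 h \<in> H \<and> \<phi> (p1 h) = (fst (\<phi> h), \<one>\<^bsub>B\<^esub>)" if h: "h \<in> H" for h
  proof -
    have "fst (\<phi> h) \<in> carrier A" using \<phi>c[OF h] by (simp add: mem_Times_iff)
    then have "(fst (\<phi> h), \<one>\<^bsub>B\<^esub>) \<in> carrier A \<times> carrier B" by simp
    then show ?thesis unfolding p1_def using \<psi> by blast
  qed
  have p2: "p2 h \<in> H \<and> \<phi> (p2 h) = (\<one>\<^bsub>A\<^esub>, snd (\<phi> h))" if h: "h \<in> H" for h
  proof -
    have "snd (\<phi> h) \<in> carrier B" using \<phi>c[OF h] by (simp add: mem_Times_iff)
    then have "(\<one>\<^bsub>A\<^esub>, snd (\<phi> h)) \<in> carrier A \<times> carrier B" by simp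
    then show ?thesis unfolding p2_def using \<psi> by blast
  qed
  have p1A: "\<And>h. h \<in> H \<Longrightarrow> p1 h \<in> A'" unfolding A'_def using p1 by simp
  have p2B: "\<And>h. h \<in> H \<Longrightarrow> p2 h \<in> B'" unfolding B'_def using p2 by simp
  have dec: "h = p1 h \<otimes> p2 h" if h: "h \<in> H" for h
  proof -
    have c1: "fst (\<phi> h) \<in> carrier A" "snd (\<phi> h) \<in> carrier B" using \<phi>c[OF h] by (simp_all add: mem_Times_iff)
    have "\<phi> (p1 h \<otimes> p2 h) = (fst (\<phi> h) \<otimes>\<^bsub>A\<^esub> \<one>\<^bsub>A\<^esub>, \<one>\<^bsub>B\<^esub> \<otimes>\<^bsub>B\<^esub> snd (\<phi> h))"
      using \<phi>m[of "p1 h" "p2 h"] p1[OF h] p2[OF h] by simp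
    also have "\<dots> = \<phi> h" using c1 by simp
    finally have "\<phi> (p1 h \<otimes> p2 h) = \<phi> h" .
    moreover have "p1 h \<otimes> p2 h \<in> H" using Hm p1[OF h] p2[OF h] by blast
    ultimately show ?thesis using \<phi>inj[OF h] by metis
  qed
  have Hsub: "H \<subseteq> (\<lambda>(x, y). x \<otimes> y) ` (A' \<times> B')"
  proof
    fix h assume h: "h \<in> H"
    have "(p1 h, p2 h) \<in> A' \<times> B'" using p1A[OF h] p2B[OF h] by simp
    moreover have "h = (\<lambda>(x, y). x \<otimes> y) (p1 h, p2 h)" using dec[OF h] by simp
    ultimately show "h \<in> (\<lambda>(x, y). x \<otimes> y) ` (A' \<times> B')" by (rule rev_image_eqI)
  qed
  have infAB: "infinite A' \<or> infinite B'"
  proof (rule ccontr)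
    assume "\<not> (infinite A' \<or> infinite B')"
    then have "finite (A' \<times> B')" by simp
    then have "finite ((\<lambda>(x, y). x \<otimes> y) ` (A' \<times> B'))" by (rule finite_imageI)
    then show False using Hsub infH finite_subset by blast
  qed
  have p1m: "\<And>x y. x \<in> H \<Longrightarrow> y \<in> H \<Longrightarrow> p1 (x \<otimes> y) = p1 x \<otimes> p1 y"
  proof -
    fix x y assume x: "x \<in> H" and y: "y \<in> H"
    have "\<phi> (p1 (x \<otimes> y)) = \<phi> (p1 x \<otimes> p1 y)"
      using p1 \<phi>m x y Hm \<phi>c by (auto simp: mem_Times_iff)
    then show "p1 (x \<otimes> y) = p1 x \<otimes> p1 y" using \<phi>inj p1 Hm x y by metis
  qed
  have p2m: "\<And>x y. x \<in> H \<Longrightarrow> y \<in> H \<Longrightarrow> p2 (x \<otimes> y) = p2 x \<otimes> p2 y"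
  proof -
    fix x y assume x: "x \<in> H" and y: "y \<in> H"
    have "\<phi> (p2 (x \<otimes> y)) = \<phi> (p2 x \<otimes> p2 y)"
      using p2 \<phi>m x y Hm \<phi>c by (auto simp: mem_Times_iff)
    then show "p2 (x \<otimes> y) = p2 x \<otimes> p2 y" using \<phi>inj p2 Hm x y by metis
  qed
  have p1i: "\<And>x. x \<in> H \<Longrightarrow> p1 (inv x) = inv (p1 x)"
  proof -
    fix x assume x: "x \<in> H"
    have "\<phi> (p1 (inv x)) = \<phi> (inv (p1 x))"
      using p1 \<phi>i x Hi \<phi>c by (auto simp: mem_Times_iff)
    then show "p1 (inv x) = inv (p1 x)" using \<phi>inj p1 Hi x by metis
  qed
  have p2i: "\<And>x. x \<in> H \<Longrightarrow> p2 (inv x) = inv (p2 x)"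
  proof -
    fix x assume x: "x \<in> H"
    have "\<phi> (p2 (inv x)) = \<phi> (inv (p2 x))"
      using p2 \<phi>i x Hi \<phi>c by (auto simp: mem_Times_iff)
    then show "p2 (inv x) = inv (p2 x)" using \<phi>inj p2 Hi x by metis
  qed
  have p11: "p1 \<one> = \<one>" using \<phi>inj p1[OF H1] H1 \<phi>1 by simp
  have p21: "p2 \<one> = \<one>" using \<phi>inj p2[OF H1] H1 \<phi>1 by simp
  have SH: "\<And>x. x \<in> generate G S \<Longrightarrow> x \<in> H" using S(3) by blast
  have gen1: "p1 h \<in> generate G (p1 ` S)" if h: "h \<in> generate G S" for h
    using h
  proof (induction rule: generate.induct)
    case one then show ?case by (simp add: p11 generate.one)
  next
    case (incl h)
    then have "p1 h \<in> p1 ` S" by (rule imageI)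
    then show ?case by (rule generate.incl)
  next
    case (inv h)
    then have hH: "h \<in> H" using S(2) by blast
    have "p1 h \<in> p1 ` S" using inv by (rule imageI)
    then have "inv (p1 h) \<in> generate G (p1 ` S)" by (rule generate.inv)
    then show ?case using p1i[OF hH] by simp
  next
    case (eng h1 h2)
    have "h1 \<in> H" "h2 \<in> H" using eng.hyps SH by blast+
    then have "p1 (h1 \<otimes> h2) = p1 h1 \<otimes> p1 h2" by (rule p1m)
    then show ?case using generate.eng[OF eng.IH] by simp
  qed
  have gen2: "p2 h \<in> generate G (p2 ` S)" if h: "h \<in> generate G S" for h
    using h
  proof (induction rule: generate.induct)
    case one then show ?case by (simp add: p21 generate.one)
  next
    case (incl h)
    then have "p2 h \<in> p2 ` S" by (rule imageI)
    then show ?case by (rule generate.incl)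
  next
    case (inv h)
    then have hH: "h \<in> H" using S(2) by blast
    have "p2 h \<in> p2 ` S" using inv by (rule imageI)
    then have "inv (p2 h) \<in> generate G (p2 ` S)" by (rule generate.inv)
    then show ?case using p2i[OF hH] by simp
  next
    case (eng h1 h2)
    have "h1 \<in> H" "h2 \<in> H" using eng.hyps SH by blast+
    then have "p2 (h1 \<otimes> h2) = p2 h1 \<otimes> p2 h2" by (rule p2m)
    then show ?case using generate.eng[OF eng.IH] by simp
  qed
  have TA: "finite (p1 ` S)" "p1 ` S \<subseteq> A'" "generate G (p1 ` S) = A'"
  proof -
    show "finite (p1 ` S)" using S(1) by simp
    show TAs: "p1 ` S \<subseteq> A'" using p1A S(2) by blast
    have "generate G (p1 ` S) \<subseteq> A'" using generate_subgroup_incl[OF TAs subA] .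
    moreover have "A' \<subseteq> generate G (p1 ` S)"
    proof
      fix h assume h: "h \<in> A'"
      then have hH: "h \<in> H" using AH by blast
      have "\<phi> (p1 h) = \<phi> h" using p1[OF hH] h \<phi>c[OF hH] unfolding A'_def by auto
      then have "p1 h = h" using \<phi>inj p1[OF hH] hH by blast
      then show "h \<in> generate G (p1 ` S)" using gen1 hH S(3) by metis
    qed
    ultimately show "generate G (p1 ` S) = A'" by blast
  qed
  have TB: "finite (p2 ` S)" "p2 ` S \<subseteq> B'" "generate G (p2 ` S) = B'"
  proof -
    show "finite (p2 ` S)" using S(1) by simp
    show TBs: "p2 ` S \<subseteq> B'" using p2B S(2) by blast
    have "generate G (p2 ` S) \<subseteq> B'" using generate_subgroup_incl[OF TBs subB] .
    moreover have "B' \<subseteq> generate G (p2 ` S)"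
    proof
      fix h assume h: "h \<in> B'"
      then have hH: "h \<in> H" using BH by blast
      have "\<phi> (p2 h) = \<phi> h" using p2[OF hH] h \<phi>c[OF hH] unfolding B'_def by auto
      then have "p2 h = h" using \<phi>inj p2[OF hH] hH by blast
      then show "h \<in> generate G (p2 ` S)" using gen2 hH S(3) by metis
    qed
    ultimately show "generate G (p2 ` S) = B'" by blast
  qed
  obtain \<alpha> where \<alpha>: "\<alpha> \<in> carrier A" "\<alpha> \<noteq> \<one>\<^bsub>A\<^esub>" using ntA A.one_closed by blast
  obtain \<beta> where \<beta>: "\<beta> \<in> carrier B" "\<beta> \<noteq> \<one>\<^bsub>B\<^esub>" using ntB B.one_closed by blast
  define a0 where "a0 = \<psi> (\<alpha>, \<one>\<^bsub>B\<^esub>)"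
  define b0 where "b0 = \<psi> (\<one>\<^bsub>A\<^esub>, \<beta>)"
  have a0: "a0 \<in> A'" "a0 \<noteq> \<one>" unfolding a0_def A'_def using \<psi>[of "(\<alpha>, \<one>\<^bsub>B\<^esub>)"] \<alpha> \<phi>1 by auto
  have b0: "b0 \<in> B'" "b0 \<noteq> \<one>" unfolding b0_def B'_def using \<psi>[of "(\<one>\<^bsub>A\<^esub>, \<beta>)"] \<beta> \<phi>1 by auto
  from infAB show False
  proof
    assume "infinite A'"
    then show False using main_asym[OF subA AH subB BH comm triv TA _ b0] by blast
  next
    assume "infinite B'"
    moreover have "\<forall>b\<in>B'. \<forall>a\<in>A'. b \<otimes> a = a \<otimes> b" using comm by metis
    moreover have "B' \<inter> A' \<subseteq> {\<one>}" using triv by blast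
    ultimately show False using main_asym[OF subB BH subA AH _ _ TB _ a0] by blast
  qed
qed

end

theorem lemma2p4:
  fixes d :: nat and c :: "nat list set \<Rightarrow> nat"
    and F F' :: "(nat \<Rightarrow> nat) set" and H :: "(nat list \<Rightarrow> nat list) set"
    and A :: "'a monoid" and B :: "'b monoid"
  assumes "d \<ge> 3"
    and "legal_coloring d c"
    and "subgroup F (BijGroup (Omg d))" and "subgroup F' (BijGroup (Omg d))" and "F \<subseteq> F'"
    and "preserves_orbits (Omg d) F F'"
    and "acts_freely (Omg d) F"
    and "subgroup H (BijGroup (TV d))" and "H \<subseteq> GFF d c F F'"
    and "\<exists>S. finite S \<and> S \<subseteq> H \<and> generate (BijGroup (TV d)) S = H"
    and "group A" and "group B"
    and "carrier A \<noteq> {\<one>\<^bsub>A\<^esub>}" and "carrier B \<noteq> {\<one>\<^bsub>B\<^esub>}"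
    and "(BijGroup (TV d))\<lparr>carrier := H\<rparr> \<cong> A \<times>\<times> B"
  shows "finite H"
proof -
  have C: "col d c F" unfolding col_def using assms(2,3,7) by blast
  have HA: "H \<subseteq> AutT d" using assms(9) unfolding GFF_def G_grp_def by blast
  have Hf: "\<forall>h\<in>H. finite (col.sing d c F h)"
  proof
    fix h assume "h \<in> H"
    then have "h \<in> G_grp d c F" using assms(9) unfolding GFF_def by blast
    then show "finite (col.sing d c F h)" unfolding G_grp_def col.sing_def[OF C] by blast
  qed
  interpret M: mctx d c F "BijGroup (TV d)" H
    unfolding mctx_def mctx_axioms_def using C group_BijGroup assms(8) HA Hf by blast
  show ?thesis using M.final[OF assms(10) assms(11) assms(12) assms(13) assms(14) assms(15)] .
qed

end
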